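(* For every commutative ring $R$ with unity, the group $E(R)$ is topologically generated by $\{V^n\langle x\rangle\mid x\in R,\ n\ge0\}$. Moreover, the functor $E:\mathsf{ComRings}\to\mathsf{Ab}$ is a pre-Witt functor.
   Context: Fix a prime $p$. For a commutative ring $B$: $B^{\mathbb N_0}$ has the product topology, $V(b_0,b_1,\dots)=p(0,b_0,b_1,\dots)$, $\langle b\rangle=(b,b^p,b^{p^2},\dots)$, and $X(B)$ is the closed subgroup generated by $\{V^n\langle b\rangle\}$. For $R$ commutative let $A=\mathbb Z[R]$ be the polynomial ring on the set $R$ (variable $[x]$ for $x\in R$), $I$ the kernel of the natural surjection $A\to R$, and $X_I(A)\subset X(A)$ the closed subgroup generated by $\{V^n\langle a\rangle-V^n\langle b\rangle\mid n\in\mathbb N_0,\ a,b\in A,\ a-b\in I\}$. Set $E(R)=X(A)/X_I(A)$, with induced endomorphism $V$ and map $\langle\ \rangle:R\to E(R)$, $x\mapsto$ class of $\langle [x]\rangle$; the topology on $E(R)$ is the quotient topology. A pre-Witt functor is a functor $F:\mathsf{ComRings}\to\mathsf{Ab}$ with functorial group endomorphisms $V$ and functorial set maps $\langle\ \rangle:R\to F(R)$ such that: (1) $\langle 0\rangle=0$ and, if $p\ne2$, $\langle -x\rangle=-\langle x\rangle$; (2) $x\mapsto V\langle x^p\rangle-p\langle x\rangle$ is additive; (3) $F(R)$ is complete with respect to the filtration $\{V^nF(R)\}$; (4) $A$ $p$-torsion free implies $F(A)$ $p$-torsion free. *)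

theory Defs
  imports "HOL-Analysis.Analysis" "HOL-Library.Poly_Mapping" "HOL-Algebra.Algebra"
begin

definition seqV :: "nat \<Rightarrow> (nat \<Rightarrow> 'b::comm_ring_1) \<Rightarrow> (nat \<Rightarrow> 'b)" where
  "seqV p b = (\<lambda>i. if i = 0 then 0 else of_nat p * b (i - 1))"

definition teich :: "nat \<Rightarrow> 'b::comm_ring_1 \<Rightarrow> (nat \<Rightarrow> 'b)" where
  "teich p b = (\<lambda>i. b ^ (p ^ i))"

definition seq_top :: "(nat \<Rightarrow> 'b) topology" where
  "seq_top = product_topology (\<lambda>_. discrete_topology UNIV) UNIV"

definition add_subgroup :: "(nat \<Rightarrow> 'b::ab_group_add) set \<Rightarrow> bool" where
  "add_subgroup H \<longleftrightarrow> (\<lambda>_. 0) \<in> H \<and> (\<forall>x\<in>H. \<forall>y\<in>H. (\<lambda>i. x i + y i) \<in> H)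
     \<and> (\<forall>x\<in>H. (\<lambda>i. - x i) \<in> H)"

definition closed_subgroup_gen :: "(nat \<Rightarrow> 'b::ab_group_add) set \<Rightarrow> (nat \<Rightarrow> 'b) set" where
  "closed_subgroup_gen S = \<Inter>{H. add_subgroup H \<and> closedin seq_top H \<and> S \<subseteq> H}"

definition Xgrp :: "nat \<Rightarrow> (nat \<Rightarrow> 'b::comm_ring_1) set" where
  "Xgrp p = closed_subgroup_gen {(seqV p ^^ n) (teich p b) | n b. True}"

type_synonym 'r zpoly = "('r \<Rightarrow>\<^sub>0 nat) \<Rightarrow>\<^sub>0 int"

definition pvar :: "'r \<Rightarrow> 'r zpoly" where
  "pvar x = Poly_Mapping.single (Poly_Mapping.single x 1) 1"

definition peval :: "('r \<Rightarrow> 'b::comm_ring_1) \<Rightarrow> 'r zpoly \<Rightarrow> 'b" where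
  "peval \<phi> P = (\<Sum>mon\<in>Poly_Mapping.keys P. of_int (Poly_Mapping.lookup P mon) * (\<Prod>v\<in>Poly_Mapping.keys mon. (\<phi> v) ^ (Poly_Mapping.lookup mon v)))"

definition Iker :: "('r::comm_ring_1) zpoly set" where
  "Iker = {a. peval (id :: 'r \<Rightarrow> 'r) a = 0}"

definition XIgrp :: "nat \<Rightarrow> (nat \<Rightarrow> ('r::comm_ring_1) zpoly) set" where
  "XIgrp p = closed_subgroup_gen
     {(\<lambda>i. (seqV p ^^ n) (teich p a) i - (seqV p ^^ n) (teich p b) i) | n a b.
        a - b \<in> (Iker :: 'r zpoly set)}"

type_synonym 'r Eelt = "(nat \<Rightarrow> 'r zpoly) set"

definition Ecos :: "nat \<Rightarrow> (nat \<Rightarrow> ('r::comm_ring_1) zpoly) \<Rightarrow> 'r Eelt" where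
  "Ecos p x = (\<lambda>y. (\<lambda>i. x i + y i)) ` XIgrp p"

definition E :: "nat \<Rightarrow> ('r::comm_ring_1) Eelt monoid" where
  "E p = \<lparr> carrier = Ecos p ` Xgrp p,
           mult = (\<lambda>C D. {(\<lambda>i. c i + d i) | c d. c \<in> C \<and> d \<in> D}),
           one = XIgrp p \<rparr>"

definition EV :: "nat \<Rightarrow> ('r::comm_ring_1) Eelt \<Rightarrow> 'r Eelt" where
  "EV p C = {(\<lambda>i. seqV p c i + y i) | c y. c \<in> C \<and> y \<in> XIgrp p}"

definition Eteich :: "nat \<Rightarrow> 'r::comm_ring_1 \<Rightarrow> 'r Eelt" where
  "Eteich p x = Ecos p (teich p (pvar x))"

text \<open>quotient topology on E(R) (X(A) carries the subspace topology of A^N)\<close>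
definition Etop :: "nat \<Rightarrow> ('r::comm_ring_1) Eelt topology" where
  "Etop p = topology (\<lambda>U. U \<subseteq> carrier (E p) \<and>
                        openin (subtopology seq_top (Xgrp p)) (\<Union>U))"

definition cring_hom :: "('r::comm_ring_1 \<Rightarrow> 's::comm_ring_1) \<Rightarrow> bool" where
  "cring_hom f \<longleftrightarrow> f 0 = 0 \<and> f 1 = 1 \<and> (\<forall>x y. f (x + y) = f x + f y)
      \<and> (\<forall>x y. f (x * y) = f x * f y)"

definition Zmap :: "('r \<Rightarrow> 's) \<Rightarrow> 'r zpoly \<Rightarrow> 's zpoly" where
  "Zmap f = peval (\<lambda>x. pvar (f x))"

definition Emap :: "nat \<Rightarrow> ('r::comm_ring_1 \<Rightarrow> 's::comm_ring_1) \<Rightarrow> 'r Eelt \<Rightarrow> 's Eelt" where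
  "Emap p f C = {(\<lambda>i. Zmap f (c i) + y i) | c y. c \<in> C \<and> y \<in> XIgrp p}"

definition filt_complete :: "('a, 'm) monoid_scheme \<Rightarrow> ('a \<Rightarrow> 'a) \<Rightarrow> bool" where
  "filt_complete G V \<longleftrightarrow>
     (\<Inter>n. (V ^^ n) ` carrier G) = {\<one>\<^bsub>G\<^esub>} \<and>
     (\<forall>x :: nat \<Rightarrow> 'a.
        (\<forall>n. x n \<in> carrier G \<and> x (Suc n) \<otimes>\<^bsub>G\<^esub> inv\<^bsub>G\<^esub> (x n) \<in> (V ^^ n) ` carrier G)
        \<longrightarrow> (\<exists>y\<in>carrier G. \<forall>n. y \<otimes>\<^bsub>G\<^esub> inv\<^bsub>G\<^esub> (x n) \<in> (V ^^ n) ` carrier G))"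

end

theory Submission
  imports Defs
begin

definition mv :: "('r \<Rightarrow> 'b::comm_ring_1) \<Rightarrow> ('r \<Rightarrow>\<^sub>0 nat) \<Rightarrow> 'b" where
  "mv \<phi> m = (\<Prod>v\<in>Poly_Mapping.keys m. (\<phi> v) ^ (Poly_Mapping.lookup m v))"

lemma mv_superset:
  assumes "finite S" "Poly_Mapping.keys m \<subseteq> S"
  shows "mv \<phi> m = (\<Prod>v\<in>S. (\<phi> v) ^ (Poly_Mapping.lookup m v))"
  unfolding mv_def
  by (rule prod.mono_neutral_left[OF assms(1,2)])
     (auto simp: in_keys_iff)

lemma mv_add: "mv \<phi> (m + n) = mv \<phi> m * mv \<phi> n"
proof -
  let ?S = "Poly_Mapping.keys m \<union> Poly_Mapping.keys n"
  have "mv \<phi> (m + n) = (\<Prod>v\<in>?S. (\<phi> v) ^ (Poly_Mapping.lookup (m+n) v))"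
    by (rule mv_superset) (use keys_add[of m n] keys_add[of P Q] in auto)
  also have "\<dots> = (\<Prod>v\<in>?S. (\<phi> v) ^ (Poly_Mapping.lookup m v)) * (\<Prod>v\<in>?S. (\<phi> v) ^ (Poly_Mapping.lookup n v))"
    by (simp add: lookup_add power_add prod.distrib)
  also have "\<dots> = mv \<phi> m * mv \<phi> n"
    by (subst (1 2) mv_superset[of ?S]) auto
  finally show ?thesis .
qed

lemma mv_zero [simp]: "mv \<phi> 0 = 1"
  by (simp add: mv_def)

lemma mv_single [simp]: "mv \<phi> (Poly_Mapping.single v k) = \<phi> v ^ k"
  by (simp add: mv_def)

lemma peval_alt: "peval \<phi> P = (\<Sum>mon\<in>Poly_Mapping.keys P. of_int (Poly_Mapping.lookup P mon) * mv \<phi> mon)"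
  by (simp add: peval_def mv_def)

lemma peval_superset:
  assumes "finite S" "Poly_Mapping.keys P \<subseteq> S"
  shows "peval \<phi> P = (\<Sum>mon\<in>S. of_int (Poly_Mapping.lookup P mon) * mv \<phi> mon)"
  unfolding peval_alt
  by (rule sum.mono_neutral_left[OF assms(1,2)]) (auto simp: in_keys_iff)

lemma peval_add: "peval \<phi> (P + Q) = peval \<phi> P + peval \<phi> Q"
proof -
  let ?S = "Poly_Mapping.keys P \<union> Poly_Mapping.keys Q"
  have "peval \<phi> (P + Q) = (\<Sum>mon\<in>?S. of_int (Poly_Mapping.lookup (P+Q) mon) * mv \<phi> mon)"
    by (rule peval_superset) (use keys_add[of m n] keys_add[of P Q] in auto)
  also have "\<dots> = (\<Sum>mon\<in>?S. of_int (Poly_Mapping.lookup P mon) * mv \<phi> mon) + (\<Sum>mon\<in>?S. of_int (Poly_Mapping.lookup Q mon) * mv \<phi> mon)"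
    by (simp add: lookup_add distrib_right sum.distrib)
  also have "\<dots> = peval \<phi> P + peval \<phi> Q"
    by (subst (1 2) peval_superset[of ?S]) auto
  finally show ?thesis .
qed

lemma peval_zero [simp]: "peval \<phi> 0 = 0"
  by (simp add: peval_def)

lemma peval_single: "peval \<phi> (Poly_Mapping.single m c) = of_int c * mv \<phi> m"
  by (simp add: peval_alt)

lemma peval_sum: "peval \<phi> (sum f S) = (\<Sum>x\<in>S. peval \<phi> (f x))"
  by (induction S rule: infinite_finite_induct) (auto simp: peval_add)

lemma poly_decomp: "P = (\<Sum>k\<in>Poly_Mapping.keys P. Poly_Mapping.single k (Poly_Mapping.lookup P k))"
  by (rule poly_mapping_eqI)
     (auto simp: lookup_sum lookup_single when_def in_keys_iff sum.delta)

lemma peval_mult: "peval \<phi> (P * Q) = peval \<phi> P * peval \<phi> Q"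
proof -
  let ?sP = "\<lambda>k. Poly_Mapping.single k (Poly_Mapping.lookup P k)"
  let ?sQ = "\<lambda>k. Poly_Mapping.single k (Poly_Mapping.lookup Q k)"
  have "P * Q = (\<Sum>k\<in>Poly_Mapping.keys P. ?sP k) * (\<Sum>l\<in>Poly_Mapping.keys Q. ?sQ l)"
    by (subst (1) poly_decomp, subst (2) poly_decomp) (rule refl)
  also have "\<dots> = (\<Sum>k\<in>Poly_Mapping.keys P. \<Sum>l\<in>Poly_Mapping.keys Q. ?sP k * ?sQ l)"
    by (rule sum_product)
  finally have "peval \<phi> (P * Q) = (\<Sum>k\<in>Poly_Mapping.keys P. \<Sum>l\<in>Poly_Mapping.keys Q. peval \<phi> (?sP k * ?sQ l))"
    by (simp add: peval_sum)
  also have "\<dots> = (\<Sum>k\<in>Poly_Mapping.keys P. \<Sum>l\<in>Poly_Mapping.keys Q. peval \<phi> (?sP k) * peval \<phi> (?sQ l))"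
    by (simp add: mult_single peval_single mv_add mult_ac)
  also have "\<dots> = (\<Sum>k\<in>Poly_Mapping.keys P. peval \<phi> (?sP k)) * (\<Sum>l\<in>Poly_Mapping.keys Q. peval \<phi> (?sQ l))"
    by (rule sum_product[symmetric])
  also have "\<dots> = peval \<phi> P * peval \<phi> Q"
    by (subst (3) poly_decomp, subst (3) poly_decomp) (simp add: peval_sum)
  finally show ?thesis .
qed

lemma peval_one [simp]: "peval \<phi> 1 = 1"
  by (simp add: peval_def)

lemma peval_uminus: "peval \<phi> (- P) = - peval \<phi> P"
  using peval_add[of \<phi> P "-P"] by (simp add: eq_neg_iff_add_eq_0 add.commute)

lemma peval_diff: "peval \<phi> (P - Q) = peval \<phi> P - peval \<phi> Q"
  using peval_add[of \<phi> P "-Q"] by (simp add: peval_uminus)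

lemma peval_pvar [simp]: "peval \<phi> (pvar v) = \<phi> v"
  by (simp add: pvar_def peval_single)

lemma peval_hom: "cring_hom (peval \<phi>)"
  by (simp add: cring_hom_def peval_add peval_mult)


lemma ch_0: "cring_hom f \<Longrightarrow> f 0 = 0" by (simp add: cring_hom_def)
lemma ch_1: "cring_hom f \<Longrightarrow> f 1 = 1" by (simp add: cring_hom_def)
lemma ch_add: "cring_hom f \<Longrightarrow> f (x + y) = f x + f y" by (simp add: cring_hom_def)
lemma ch_mult: "cring_hom f \<Longrightarrow> f (x * y) = f x * f y" by (simp add: cring_hom_def)
lemma ch_uminus: "cring_hom f \<Longrightarrow> f (- x) = - f x"
  using ch_add[of f x "-x"] ch_0[of f] by (simp add: eq_neg_iff_add_eq_0 add.commute)
lemma ch_diff: "cring_hom f \<Longrightarrow> f (x - y) = f x - f y"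
  using ch_add[of f x "-y"] ch_uminus[of f y] by simp
lemma ch_of_nat: "cring_hom f \<Longrightarrow> f (of_nat n) = of_nat n"
  by (induction n) (simp_all add: ch_0 ch_1 ch_add)
lemma ch_of_int: "cring_hom f \<Longrightarrow> f (of_int n) = of_int n"
  by (cases n rule: int_cases2) (simp_all add: ch_of_nat ch_uminus)
lemma ch_power: "cring_hom f \<Longrightarrow> f (x ^ n) = f x ^ n"
  by (induction n) (simp_all add: ch_1 ch_mult)
lemma ch_comp: "cring_hom f \<Longrightarrow> cring_hom g \<Longrightarrow> cring_hom (g \<circ> f)"
  by (simp add: cring_hom_def)
lemma ch_id: "cring_hom id"
  by (simp add: cring_hom_def)

lemma single_single_pow: "Poly_Mapping.single (Poly_Mapping.single v k) (1::int) = pvar v ^ k"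
proof (induction k)
  case 0 then show ?case by simp
next
  case (Suc k)
  have "Poly_Mapping.single (Poly_Mapping.single v (Suc k)) (1::int)
      = Poly_Mapping.single (Poly_Mapping.single v k + Poly_Mapping.single v 1) (1 * 1)"
    by (simp add: single_add[symmetric])
  also have "\<dots> = pvar v ^ k * pvar v"
    by (simp only: mult_single[symmetric] Suc pvar_def)
  finally show ?case by (simp add: mult.commute)
qed

lemma single_sum: "Poly_Mapping.single (sum g S) (1::int) = (\<Prod>w\<in>S. Poly_Mapping.single (g w) 1)"
proof (induction S rule: infinite_finite_induct)
  case (insert x F)
  have "Poly_Mapping.single (g x + sum g F) (1::int) = Poly_Mapping.single (g x) 1 * Poly_Mapping.single (sum g F) 1"
    by (simp add: mult_single)
  then show ?case using insert by simp
qed simp_all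

lemma zpoly_induct:
  fixes Q :: "'r zpoly \<Rightarrow> bool"
  assumes c: "\<And>c. Q (of_int c)" and v: "\<And>v. Q (pvar v)"
    and a: "\<And>x y. Q x \<Longrightarrow> Q y \<Longrightarrow> Q (x + y)"
    and m: "\<And>x y. Q x \<Longrightarrow> Q y \<Longrightarrow> Q (x * y)"
  shows "Q P"
proof -
  have sum: "Q (sum f S)" if "\<And>x. x \<in> S \<Longrightarrow> Q (f x)" for f and S :: "'b set"
    using that
    by (induction S rule: infinite_finite_induct) (auto intro: a simp: c[of 0, simplified])
  have prod: "Q (prod f S)" if "\<And>x. x \<in> S \<Longrightarrow> Q (f x)" for f and S :: "'b set"
    using that
    by (induction S rule: infinite_finite_induct) (auto intro: m simp: c[of 1, simplified])
  have pw: "Q (pvar w ^ k)" for w k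
    by (induction k) (auto intro: m v simp: c[of 1, simplified])
  have mon: "Q (Poly_Mapping.single m 1)" for m :: "'r \<Rightarrow>\<^sub>0 nat"
  proof -
    have "Poly_Mapping.single m (1::int) = Poly_Mapping.single (\<Sum>w\<in>Poly_Mapping.keys m. Poly_Mapping.single w (Poly_Mapping.lookup m w)) 1"
      by (subst poly_decomp) (rule refl)
    also have "\<dots> = (\<Prod>w\<in>Poly_Mapping.keys m. pvar w ^ Poly_Mapping.lookup m w)"
      by (simp add: single_sum single_single_pow)
    finally show ?thesis by (auto intro: prod pw)
  qed
  have "Q (Poly_Mapping.single k c)" for k c
  proof -
    have "Poly_Mapping.single k c = of_int c * Poly_Mapping.single k (1::int)"
      by (simp add: single_of_int[symmetric] mult_single)
    then show ?thesis using m[OF c mon] by simp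
  qed
  then show ?thesis
    by (subst poly_decomp) (auto intro: sum)
qed

lemma zpoly_hom_unique:
  fixes h1 h2 :: "'r zpoly \<Rightarrow> 'b::comm_ring_1"
  assumes "cring_hom h1" "cring_hom h2" "\<And>v. h1 (pvar v) = h2 (pvar v)"
  shows "h1 P = h2 P"
  by (induction P rule: zpoly_induct)
     (use assms in \<open>simp_all add: ch_of_int ch_add ch_mult\<close>)

lemma peval_unique:
  assumes "cring_hom h" shows "h P = peval (h \<circ> pvar) P"
  by (rule zpoly_hom_unique[OF assms peval_hom]) simp

lemma peval_pvar_id: "peval pvar P = P"
  using peval_unique[OF ch_id, of P] by (simp add: comp_def)

lemma hom_peval:
  assumes "cring_hom f" shows "f (peval \<phi> P) = peval (f \<circ> \<phi>) P"
proof -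
  have "(f \<circ> peval \<phi>) P = peval (f \<circ> \<phi>) P"
    by (rule zpoly_hom_unique[OF ch_comp[OF peval_hom assms] peval_hom]) (simp add: comp_def)
  then show ?thesis by simp
qed

lemma Zmap_hom: "cring_hom (Zmap f)"
  by (simp add: Zmap_def peval_hom)

lemma Zmap_pvar [simp]: "Zmap f (pvar v) = pvar (f v)"
  by (simp add: Zmap_def)

lemma Zmap_id: "Zmap id P = P"
  by (simp add: Zmap_def peval_pvar_id[unfolded comp_def] id_def)

lemma Zmap_comp: "Zmap (g \<circ> f) P = Zmap g (Zmap f P)"
  by (rule zpoly_hom_unique[OF Zmap_hom ch_comp[OF Zmap_hom Zmap_hom], simplified]) simp

lemma peval_Zmap: "cring_hom f \<Longrightarrow> peval id (Zmap f P) = f (peval id P)"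
  by (rule zpoly_hom_unique[OF ch_comp[OF Zmap_hom peval_hom] ch_comp[OF peval_hom], simplified]) simp_all


definition seqclosed :: "(nat \<Rightarrow> 'b) set \<Rightarrow> bool" where
  "seqclosed H \<longleftrightarrow> (\<forall>x. (\<forall>n. \<exists>h\<in>H. \<forall>i<n. h i = x i) \<longrightarrow> x \<in> H)"

lemma topspace_seq_top [simp]: "topspace seq_top = UNIV"
  by (simp add: seq_top_def)

lemma open_seq_iff:
  "openin seq_top S \<longleftrightarrow> (\<forall>x\<in>S. \<exists>n. \<forall>y. (\<forall>i<n. y i = x i) \<longrightarrow> y \<in> S)"
proof
  assume "openin seq_top S"
  then have o: "\<forall>x \<in> S. \<exists>U. finite {i \<in> UNIV. U i \<noteq> UNIV} \<and> x \<in> Pi\<^sub>E UNIV U \<and> Pi\<^sub>E UNIV U \<subseteq> S"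
    unfolding seq_top_def openin_product_topology_alt by simp
  show "\<forall>x\<in>S. \<exists>n. \<forall>y. (\<forall>i<n. y i = x i) \<longrightarrow> y \<in> S"
  proof
    fix x assume "x \<in> S"
    then obtain U where fin: "finite {i. U i \<noteq> UNIV}" and x: "x \<in> Pi\<^sub>E UNIV U" and sub: "Pi\<^sub>E UNIV U \<subseteq> S"
      using o by auto
    obtain n where n: "{i. U i \<noteq> UNIV} \<subseteq> {..<n}" using finite_nat_bounded[OF fin] by blast
    show "\<exists>n. \<forall>y. (\<forall>i<n. y i = x i) \<longrightarrow> y \<in> S"
    proof (intro exI allI impI)
      fix y assume a: "\<forall>i<n. y i = x i"
      have "y \<in> Pi\<^sub>E UNIV U"
      proof (simp add: PiE_def Pi_def, intro allI)
        fix i show "y i \<in> U i"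
        proof (cases "i < n")
          case True then show ?thesis using a x by (auto simp: PiE_def)
        next
          case False then show ?thesis using n by auto
        qed
      qed
      then show "y \<in> S" using sub by blast
    qed
  qed
next
  assume r: "\<forall>x\<in>S. \<exists>n. \<forall>y. (\<forall>i<n. y i = x i) \<longrightarrow> y \<in> S"
  show "openin seq_top S"
    unfolding seq_top_def openin_product_topology_alt
  proof
    fix x assume "x \<in> S"
    then obtain n where n: "\<forall>y. (\<forall>i<n. y i = x i) \<longrightarrow> y \<in> S" using r by blast
    define U where "U i = (if i < n then {x i} else UNIV)" for i
    have "finite {i \<in> UNIV. U i \<noteq> topspace (discrete_topology UNIV)}"
      by (rule finite_subset[of _ "{..<n}"]) (auto simp: U_def)
    moreover have "x \<in> Pi\<^sub>E UNIV U" by (auto simp: U_def)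
    moreover have "Pi\<^sub>E UNIV U \<subseteq> S"
      using n by (auto simp: U_def PiE_def Pi_def)
    ultimately show "\<exists>U. finite {i \<in> UNIV. U i \<noteq> topspace (discrete_topology UNIV)} \<and>
             (\<forall>i\<in>UNIV. openin (discrete_topology UNIV) (U i)) \<and> x \<in> Pi\<^sub>E UNIV U \<and> Pi\<^sub>E UNIV U \<subseteq> S"
      by auto
  qed
qed

lemma closed_seq_iff: "closedin seq_top H \<longleftrightarrow> seqclosed H"
proof -
  have "closedin seq_top H \<longleftrightarrow> openin seq_top (- H)"
    by (simp add: closedin_def Compl_eq_Diff_UNIV)
  also have "\<dots> \<longleftrightarrow> seqclosed H"
    unfolding open_seq_iff
  proof
    assume o: "\<forall>x\<in>-H. \<exists>n. \<forall>y. (\<forall>i<n. y i = x i) \<longrightarrow> y \<in> -H"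
    show "seqclosed H" unfolding seqclosed_def
    proof (intro allI impI, rule ccontr)
      fix x assume a: "\<forall>n. \<exists>h\<in>H. \<forall>i<n. h i = x i" and "x \<notin> H"
      then obtain n where n: "\<forall>y. (\<forall>i<n. y i = x i) \<longrightarrow> y \<in> -H" using o by blast
      from a obtain h where "h \<in> H" "\<forall>i<n. h i = x i" by blast
      with n show False by blast
    qed
  next
    assume s: "seqclosed H"
    show "\<forall>x\<in>-H. \<exists>n. \<forall>y. (\<forall>i<n. y i = x i) \<longrightarrow> y \<in> -H"
    proof
      fix x assume "x \<in> -H"
      then have "\<not>(\<forall>n. \<exists>h\<in>H. \<forall>i<n. h i = x i)" using s unfolding seqclosed_def by blast
      then obtain n where "\<forall>h\<in>H. \<not>(\<forall>i<n. h i = x i)" by blast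
      then show "\<exists>n. \<forall>y. (\<forall>i<n. y i = x i) \<longrightarrow> y \<in> -H" by blast
    qed
  qed
  finally show ?thesis .
qed

lemma cg_props:
  "add_subgroup (closed_subgroup_gen S) \<and> seqclosed (closed_subgroup_gen S) \<and> S \<subseteq> closed_subgroup_gen S"
proof -
  let ?K = "{H. add_subgroup H \<and> closedin seq_top H \<and> S \<subseteq> H}"
  have U: "UNIV \<in> ?K"
    using closedin_topspace[of seq_top] by (auto simp: add_subgroup_def)
  have "closedin seq_top (\<Inter>?K)"
    by (rule closedin_Inter) (use U in auto)
  moreover have "add_subgroup (\<Inter>?K)"
    unfolding add_subgroup_def by (auto simp: add_subgroup_def)
  ultimately show ?thesis
    by (auto simp: closed_subgroup_gen_def closed_seq_iff)
qed

lemma cg_sub: "S \<subseteq> closed_subgroup_gen S"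
  using cg_props by blast

lemma cg_min: "add_subgroup H \<Longrightarrow> seqclosed H \<Longrightarrow> S \<subseteq> H \<Longrightarrow> closed_subgroup_gen S \<subseteq> H"
  by (auto simp: closed_subgroup_gen_def closed_seq_iff)

lemma cg_closed: "seqclosed (closed_subgroup_gen S)"
  using cg_props by blast

lemma cg_0: "(\<lambda>_. 0) \<in> closed_subgroup_gen S"
  using cg_props[of S] unfolding add_subgroup_def by blast

lemma cg_add: "x \<in> closed_subgroup_gen S \<Longrightarrow> y \<in> closed_subgroup_gen S \<Longrightarrow> (\<lambda>i. x i + y i) \<in> closed_subgroup_gen S"
  using cg_props[of S] unfolding add_subgroup_def by blast

lemma cg_neg: "x \<in> closed_subgroup_gen S \<Longrightarrow> (\<lambda>i. - x i) \<in> closed_subgroup_gen S"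
  using cg_props[of S] unfolding add_subgroup_def by blast


lemma cg_diff: "x \<in> closed_subgroup_gen S \<Longrightarrow> y \<in> closed_subgroup_gen S \<Longrightarrow> (\<lambda>i. x i - y i) \<in> closed_subgroup_gen S"
  using cg_add[OF _ cg_neg[of y S], of x] by simp

lemma cg_smul: "x \<in> closed_subgroup_gen S \<Longrightarrow> (\<lambda>i. of_nat n * x i) \<in> closed_subgroup_gen S"
proof (induction n)
  case 0 then show ?case using cg_0[of S] by simp
next
  case (Suc n) then show ?case using cg_add[OF Suc(2) Suc(1)] by (simp add: distrib_right)
qed

definition seqcont :: "((nat \<Rightarrow> 'a) \<Rightarrow> (nat \<Rightarrow> 'b)) \<Rightarrow> bool" where
  "seqcont F \<longleftrightarrow> (\<forall>n. \<exists>m. \<forall>x y. (\<forall>i<m. x i = y i) \<longrightarrow> (\<forall>i<n. F x i = F y i))"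

definition seqadd :: "((nat \<Rightarrow> 'a::ab_group_add) \<Rightarrow> (nat \<Rightarrow> 'b::ab_group_add)) \<Rightarrow> bool" where
  "seqadd F \<longleftrightarrow> (\<forall>x y. F (\<lambda>i. x i + y i) = (\<lambda>i. F x i + F y i))"

lemma seqadd_D: "seqadd F \<Longrightarrow> F (\<lambda>i. x i + y i) = (\<lambda>i. F x i + F y i)"
  by (simp add: seqadd_def)

lemma seqadd_0:
  assumes "seqadd F" shows "F (\<lambda>_. 0) = (\<lambda>_. 0)"
proof
  fix i
  have "F (\<lambda>i. 0 + 0) = (\<lambda>i. F (\<lambda>_. 0) i + F (\<lambda>_. 0) i)"
    using seqadd_D[OF assms, of "\<lambda>_. 0" "\<lambda>_. 0"] by simp
  then have "F (\<lambda>_. 0) = (\<lambda>i. F (\<lambda>_. 0) i + F (\<lambda>_. 0) i)" by simp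
  from fun_cong[OF this, of i] show "F (\<lambda>_. 0) i = 0" by simp
qed

lemma seqadd_neg:
  assumes a: "seqadd F" shows "F (\<lambda>i. - x i) = (\<lambda>i. - F x i)"
proof
  fix i
  have "F (\<lambda>i. x i + - x i) = (\<lambda>i. F x i + F (\<lambda>i. - x i) i)"
    using seqadd_D[OF a, of x "\<lambda>i. - x i"] by simp
  then have "(\<lambda>i. F x i + F (\<lambda>i. - x i) i) = (\<lambda>_. 0)" using seqadd_0[OF a] by simp
  from fun_cong[OF this, of i] have "F x i + F (\<lambda>i. - x i) i = 0" by simp
  then show "F (\<lambda>i. - x i) i = - F x i" by (simp add: eq_neg_iff_add_eq_0 add.commute)
qed

lemma seqadd_diff: "seqadd F \<Longrightarrow> F (\<lambda>i. x i - y i) = (\<lambda>i. F x i - F y i)"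
proof -
  assume a: "seqadd F"
  have "F (\<lambda>i. x i + (\<lambda>i. - y i) i) = (\<lambda>i. F x i + F (\<lambda>i. - y i) i)"
    using seqadd_D[OF a, of x "\<lambda>i. - y i"] by simp
  then show ?thesis using seqadd_neg[OF a, of y] by simp
qed

lemma cg_hom:
  assumes add: "seqadd F" and cont: "seqcont F" and gen: "\<And>s. s \<in> S \<Longrightarrow> F s \<in> closed_subgroup_gen T"
    and x: "x \<in> closed_subgroup_gen S"
  shows "F x \<in> closed_subgroup_gen T"
proof -
  let ?H = "{x. F x \<in> closed_subgroup_gen T}"
  have "add_subgroup ?H"
    unfolding add_subgroup_def
  proof (intro conjI ballI)
    show "(\<lambda>_. 0) \<in> ?H" using seqadd_0[OF add] cg_0[of T] by simp
    show "(\<lambda>i. x i + y i) \<in> ?H" if "x \<in> ?H" "y \<in> ?H" for x y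
      using that cg_add[of "F x" T "F y"] seqadd_D[OF add, of x y] by simp
    show "(\<lambda>i. - x i) \<in> ?H" if "x \<in> ?H" for x
      using that cg_neg[of "F x" T] seqadd_neg[OF add, of x] by simp
  qed
  moreover have "seqclosed ?H"
    unfolding seqclosed_def
  proof (intro allI impI)
    fix z assume a: "\<forall>n. \<exists>h\<in>?H. \<forall>i<n. h i = z i"
    have "\<forall>n. \<exists>h\<in>closed_subgroup_gen T. \<forall>i<n. h i = F z i"
    proof
      fix n
      obtain m where m: "\<forall>x y. (\<forall>i<m. x i = y i) \<longrightarrow> (\<forall>i<n. F x i = F y i)"
        using cont unfolding seqcont_def by blast
      obtain h where h: "h \<in> ?H" "\<forall>i<m. h i = z i" using a by blast
      have "\<forall>i<n. F h i = F z i" using m h(2) by blast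
      then show "\<exists>h\<in>closed_subgroup_gen T. \<forall>i<n. h i = F z i" using h(1) by blast
    qed
    moreover have cl: "\<And>x. (\<forall>n. \<exists>h\<in>closed_subgroup_gen T. \<forall>i<n. h i = x i) \<Longrightarrow> x \<in> closed_subgroup_gen T"
      using cg_closed[of T] unfolding seqclosed_def by blast
    ultimately have "F z \<in> closed_subgroup_gen T" by blast
    then show "z \<in> ?H" by simp
  qed
  moreover have "S \<subseteq> ?H" using gen by blast
  ultimately have "closed_subgroup_gen S \<subseteq> ?H" by (rule cg_min)
  then show ?thesis using x by blast
qed

lemma seqV_apply: "seqV p b i = (if i = 0 then 0 else of_nat p * b (i - 1))"
  by (simp add: seqV_def)

lemma seqV_pow: "(seqV p ^^ n) x i = (if i < n then 0 else of_nat p ^ n * x (i - n))"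
proof (induction n arbitrary: i)
  case 0 then show ?case by simp
next
  case (Suc n)
  have "(seqV p ^^ Suc n) x i = seqV p ((seqV p ^^ n) x) i" by simp
  also have "\<dots> = (if i < Suc n then 0 else of_nat p ^ Suc n * x (i - Suc n))"
    by (cases i) (simp_all add: seqV_apply Suc.IH)
  finally show ?case .
qed

lemma seqV_add: "seqadd (seqV p)"
  by (simp add: seqadd_def seqV_def fun_eq_iff distrib_left)

lemma seqV_cont: "seqcont (seqV p)"
  unfolding seqcont_def seqV_def by (metis less_imp_diff_less)

lemma seqV_diff: "seqV p (\<lambda>i. x i - y i) = (\<lambda>i. seqV p x i - seqV p y i)"
  by (rule seqadd_diff[OF seqV_add])

lemma seqV_X: "x \<in> Xgrp p \<Longrightarrow> seqV p x \<in> Xgrp p"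
  unfolding Xgrp_def
proof (rule cg_hom[OF seqV_add seqV_cont])
  fix s assume "s \<in> {(seqV p ^^ n) (teich p b) | n b. True}"
  then obtain n b where s: "s = (seqV p ^^ n) (teich p b)" by blast
  have eq: "seqV p s = (seqV p ^^ Suc n) (teich p b)" by (simp add: s)
  show "seqV p s \<in> closed_subgroup_gen {(seqV p ^^ n) (teich p b) | n b. True}"
    by (intro cg_sub[THEN subsetD] CollectI exI[of _ "Suc n"] exI[of _ b]) (simp add: eq)
qed

lemma seqV_XI: "x \<in> XIgrp p \<Longrightarrow> seqV p x \<in> XIgrp p"
  unfolding XIgrp_def
proof (rule cg_hom[OF seqV_add seqV_cont])
  fix s assume "s \<in> {(\<lambda>i. (seqV p ^^ n) (teich p a) i - (seqV p ^^ n) (teich p b) i) | n a b.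
        a - b \<in> (Iker :: 'a zpoly set)}"
  then obtain n a b where s: "s = (\<lambda>i. (seqV p ^^ n) (teich p a) i - (seqV p ^^ n) (teich p b) i)"
    and ab: "a - b \<in> Iker" by blast
  have eq: "seqV p s = (\<lambda>i. (seqV p ^^ Suc n) (teich p a) i - (seqV p ^^ Suc n) (teich p b) i)"
    by (simp add: s seqV_diff)
  show "seqV p s \<in> closed_subgroup_gen {(\<lambda>i. (seqV p ^^ n) (teich p a) i - (seqV p ^^ n) (teich p b) i) | n a b.
        a - b \<in> (Iker :: 'a zpoly set)}"
    by (intro cg_sub[THEN subsetD] CollectI exI[of _ "Suc n"] exI[of _ a] exI[of _ b]) (simp add: eq ab del: funpow.simps)
qed

lemma teich_X: "(seqV p ^^ n) (teich p b) \<in> Xgrp p"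
  unfolding Xgrp_def by (auto intro!: cg_sub[THEN subsetD])

lemma XI_gen: "a - b \<in> Iker \<Longrightarrow> (\<lambda>i. (seqV p ^^ n) (teich p a) i - (seqV p ^^ n) (teich p b) i) \<in> XIgrp p"
  unfolding XIgrp_def by (auto intro!: cg_sub[THEN subsetD])

lemma X_0: "(\<lambda>_. 0) \<in> Xgrp p" unfolding Xgrp_def by (rule cg_0)
lemma X_add: "x \<in> Xgrp p \<Longrightarrow> y \<in> Xgrp p \<Longrightarrow> (\<lambda>i. x i + y i) \<in> Xgrp p" unfolding Xgrp_def by (rule cg_add)
lemma X_neg: "x \<in> Xgrp p \<Longrightarrow> (\<lambda>i. - x i) \<in> Xgrp p" unfolding Xgrp_def by (rule cg_neg)
lemma X_diff: "x \<in> Xgrp p \<Longrightarrow> y \<in> Xgrp p \<Longrightarrow> (\<lambda>i. x i - y i) \<in> Xgrp p" unfolding Xgrp_def by (rule cg_diff)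
lemma X_closed: "seqclosed (Xgrp p)" unfolding Xgrp_def by (rule cg_closed)
lemma X_subgroup: "add_subgroup (Xgrp p)"
  unfolding add_subgroup_def using X_0 X_add X_neg by blast

lemma XI_sub_X: "XIgrp p \<subseteq> Xgrp p"
  unfolding XIgrp_def
  by (rule cg_min[OF X_subgroup X_closed]) (auto intro!: X_diff teich_X)

lemma XI_0: "(\<lambda>_. 0) \<in> XIgrp p" unfolding XIgrp_def by (rule cg_0)
lemma XI_add: "x \<in> XIgrp p \<Longrightarrow> y \<in> XIgrp p \<Longrightarrow> (\<lambda>i. x i + y i) \<in> XIgrp p" unfolding XIgrp_def by (rule cg_add)
lemma XI_neg: "x \<in> XIgrp p \<Longrightarrow> (\<lambda>i. - x i) \<in> XIgrp p" unfolding XIgrp_def by (rule cg_neg)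
lemma XI_diff: "x \<in> XIgrp p \<Longrightarrow> y \<in> XIgrp p \<Longrightarrow> (\<lambda>i. x i - y i) \<in> XIgrp p" unfolding XIgrp_def by (rule cg_diff)
lemma XI_smul: "x \<in> XIgrp p \<Longrightarrow> (\<lambda>i. of_nat n * x i) \<in> XIgrp p" unfolding XIgrp_def by (rule cg_smul)
lemma XI_closed: "seqclosed (XIgrp p)" unfolding XIgrp_def by (rule cg_closed)


lemma Ecos_mem: "z \<in> Ecos p c \<longleftrightarrow> (\<lambda>i. z i - c i) \<in> XIgrp p"
proof
  assume "z \<in> Ecos p c"
  then obtain y where "y \<in> XIgrp p" "z = (\<lambda>i. c i + y i)" by (auto simp: Ecos_def)
  then show "(\<lambda>i. z i - c i) \<in> XIgrp p" by simp
next
  assume "(\<lambda>i. z i - c i) \<in> XIgrp p"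
  then show "z \<in> Ecos p c" unfolding Ecos_def
    by (rule rev_image_eqI) simp
qed

lemma Ecos_self: "c \<in> Ecos p c"
  using XI_0 by (simp add: Ecos_mem)

lemma Ecos_eq: "Ecos p c = Ecos p d \<longleftrightarrow> (\<lambda>i. c i - d i) \<in> XIgrp p"
proof
  assume "Ecos p c = Ecos p d"
  then show "(\<lambda>i. c i - d i) \<in> XIgrp p" using Ecos_self[of c p] by (simp add: Ecos_mem)
next
  assume a: "(\<lambda>i. c i - d i) \<in> XIgrp p"
  have "z \<in> Ecos p c \<longleftrightarrow> z \<in> Ecos p d" for z
  proof -
    have e1: "(\<lambda>i. z i - d i) = (\<lambda>i. (z i - c i) + (c i - d i))" by simp
    have e2: "(\<lambda>i. z i - c i) = (\<lambda>i. (z i - d i) - (c i - d i))" by simp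
    show ?thesis unfolding Ecos_mem
    proof
      assume "(\<lambda>i. z i - c i) \<in> XIgrp p"
      then show "(\<lambda>i. z i - d i) \<in> XIgrp p" by (subst e1) (rule XI_add[OF _ a])
    next
      assume "(\<lambda>i. z i - d i) \<in> XIgrp p"
      then show "(\<lambda>i. z i - c i) \<in> XIgrp p" by (subst e2) (rule XI_diff[OF _ a])
    qed
  qed
  then show "Ecos p c = Ecos p d" by blast
qed

lemma Ecos_mult: "mult (E p) (Ecos p c) (Ecos p d) = Ecos p (\<lambda>i. c i + d i)"
proof -
  have "z \<in> mult (E p) (Ecos p c) (Ecos p d) \<longleftrightarrow> z \<in> Ecos p (\<lambda>i. c i + d i)" for z
  proof
    assume "z \<in> mult (E p) (Ecos p c) (Ecos p d)"
    then obtain c' d' where z: "z = (\<lambda>i. c' i + d' i)" and c': "c' \<in> Ecos p c" and d': "d' \<in> Ecos p d"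
      by (auto simp: E_def)
    have "(\<lambda>i. z i - (c i + d i)) = (\<lambda>i. (c' i - c i) + (d' i - d i))" by (simp add: z algebra_simps)
    then show "z \<in> Ecos p (\<lambda>i. c i + d i)" using c' d' by (simp add: Ecos_mem XI_add)
  next
    assume a: "z \<in> Ecos p (\<lambda>i. c i + d i)"
    have zd: "(\<lambda>i. z i - d i) \<in> Ecos p c"
      using a by (simp add: Ecos_mem algebra_simps)
    have "\<exists>ca da. z = (\<lambda>i. ca i + da i) \<and> ca \<in> Ecos p c \<and> da \<in> Ecos p d"
      using zd Ecos_self[of d p] by (intro exI[of _ "\<lambda>i. z i - d i"] exI[of _ d]) simp
    then show "z \<in> mult (E p) (Ecos p c) (Ecos p d)"
      by (simp add: E_def)
  qed
  then show ?thesis by blast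
qed

lemma E_one: "one (E p) = Ecos p (\<lambda>_. 0)"
proof -
  have "XIgrp p = Ecos p (\<lambda>_. 0)"
    by (auto simp: Ecos_mem)
  then show ?thesis by (simp add: E_def)
qed

lemma E_carrier: "carrier (E p) = Ecos p ` Xgrp p"
  by (simp add: E_def)

lemma E_comm_group: "comm_group (E p)"
proof (rule comm_groupI)
  show "x \<otimes>\<^bsub>E p\<^esub> y \<in> carrier (E p)" if "x \<in> carrier (E p)" "y \<in> carrier (E p)" for x y
    using that by (auto simp: E_carrier Ecos_mult intro: X_add)
  show "\<one>\<^bsub>E p\<^esub> \<in> carrier (E p)"
    using X_0 by (auto simp: E_carrier E_one)
  show "x \<otimes>\<^bsub>E p\<^esub> y \<otimes>\<^bsub>E p\<^esub> z = x \<otimes>\<^bsub>E p\<^esub> (y \<otimes>\<^bsub>E p\<^esub> z)"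
    if "x \<in> carrier (E p)" "y \<in> carrier (E p)" "z \<in> carrier (E p)" for x y z
    using that by (auto simp: E_carrier Ecos_mult add.assoc)
  show "x \<otimes>\<^bsub>E p\<^esub> y = y \<otimes>\<^bsub>E p\<^esub> x" if "x \<in> carrier (E p)" "y \<in> carrier (E p)" for x y
    using that by (auto simp: E_carrier Ecos_mult add.commute)
  show "\<one>\<^bsub>E p\<^esub> \<otimes>\<^bsub>E p\<^esub> x = x" if "x \<in> carrier (E p)" for x
    using that by (auto simp: E_carrier Ecos_mult E_one)
  show "\<exists>y\<in>carrier (E p). y \<otimes>\<^bsub>E p\<^esub> x = \<one>\<^bsub>E p\<^esub>" if xc: "x \<in> carrier (E p)" for x
  proof -
    obtain c where c: "c \<in> Xgrp p" "x = Ecos p c" using xc by (auto simp: E_carrier)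
    then show ?thesis
      by (intro bexI[of _ "Ecos p (\<lambda>i. - c i)"]) (auto simp: E_carrier Ecos_mult E_one intro: X_neg)
  qed
qed

lemma E_group: "group (E p)"
  using E_comm_group comm_group.axioms(2) by blast

lemma E_inv: "c \<in> Xgrp p \<Longrightarrow> inv\<^bsub>E p\<^esub> (Ecos p c) = Ecos p (\<lambda>i. - c i)"
  by (rule group.inv_equality[OF E_group]) (auto simp: E_carrier Ecos_mult E_one intro: X_neg)

lemma E_pow: "c \<in> Xgrp p \<Longrightarrow> Ecos p c [^]\<^bsub>E p\<^esub> (n::nat) = Ecos p (\<lambda>i. of_nat n * c i)"
  by (induction n) (simp_all add: E_one Ecos_mult algebra_simps)

lemma EV_Ecos: "EV p (Ecos p c) = Ecos p (seqV p c)"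
proof -
  have "z \<in> EV p (Ecos p c) \<longleftrightarrow> z \<in> Ecos p (seqV p c)" for z
  proof
    assume "z \<in> EV p (Ecos p c)"
    then obtain c' y where z: "z = (\<lambda>i. seqV p c' i + y i)" and c': "c' \<in> Ecos p c" and y: "y \<in> XIgrp p"
      by (auto simp: EV_def)
    have "(\<lambda>i. z i - seqV p c i) = (\<lambda>i. seqV p (\<lambda>i. c' i - c i) i + y i)"
      by (simp add: z seqV_diff algebra_simps)
    then show "z \<in> Ecos p (seqV p c)"
      using c' y by (simp add: Ecos_mem XI_add seqV_XI)
  next
    assume a: "z \<in> Ecos p (seqV p c)"
    then have "(\<lambda>i. z i - seqV p c i) \<in> XIgrp p" by (simp add: Ecos_mem)
    moreover have "z = (\<lambda>i. seqV p c i + (z i - seqV p c i))" by simp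
    ultimately have "\<exists>ca y. z = (\<lambda>i. seqV p ca i + y i) \<and> ca \<in> Ecos p c \<and> y \<in> XIgrp p"
      using Ecos_self[of c p] by (intro exI[of _ c] exI[of _ "\<lambda>i. z i - seqV p c i"]) simp
    then show "z \<in> EV p (Ecos p c)" by (simp add: EV_def)
  qed
  then show ?thesis by blast
qed

lemma EV_pow_Ecos: "(EV p ^^ n) (Ecos p c) = Ecos p ((seqV p ^^ n) c)"
  by (induction n) (simp_all add: EV_Ecos)

lemma EV_hom: "EV p \<in> hom (E p) (E p)"
  by (rule homI) (auto simp: E_carrier EV_Ecos Ecos_mult seqV_X X_add seqadd_def[THEN iffD1, OF seqV_add])

lemma Eteich_carrier: "Eteich p x \<in> carrier (E p)"
  using teich_X[of 0 p "pvar x"] by (auto simp: Eteich_def E_carrier)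


definition Zs :: "('r \<Rightarrow> 's) \<Rightarrow> (nat \<Rightarrow> 'r zpoly) \<Rightarrow> (nat \<Rightarrow> 's zpoly)" where
  "Zs f c = (\<lambda>i. Zmap f (c i))"

lemma Zs_add: "seqadd (Zs f)"
  by (simp add: seqadd_def Zs_def ch_add[OF Zmap_hom])

lemma Zs_cont: "seqcont (Zs f)"
  unfolding seqcont_def Zs_def by metis

lemma Zs_Vpow: "Zs f ((seqV p ^^ n) x) = (seqV p ^^ n) (Zs f x)"
  by (simp add: Zs_def fun_eq_iff seqV_pow ch_0[OF Zmap_hom] ch_mult[OF Zmap_hom]
      ch_power[OF Zmap_hom] ch_of_nat[OF Zmap_hom])

lemma Zs_seqV: "Zs f (seqV p x) = seqV p (Zs f x)"
  using Zs_Vpow[where n=1 and f=f and p=p and x=x] by simp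

lemma Zs_teich: "Zs f (teich p b) = teich p (Zmap f b)"
  by (simp add: Zs_def teich_def fun_eq_iff ch_power[OF Zmap_hom])

lemma Zs_X:
  fixes f :: "'r \<Rightarrow> 's" and c :: "nat \<Rightarrow> 'r zpoly"
  shows "c \<in> Xgrp p \<Longrightarrow> Zs f c \<in> Xgrp p"
  unfolding Xgrp_def
proof (rule cg_hom[OF Zs_add Zs_cont])
  fix s assume "s \<in> {(seqV p ^^ n) (teich p b) | n (b :: 'r zpoly). True}"
  then obtain n b where s: "s = (seqV p ^^ n) (teich p b)" by blast
  have eq: "Zs f s = (seqV p ^^ n) (teich p (Zmap f b))" by (simp add: s Zs_Vpow Zs_teich)
  show "Zs f s \<in> closed_subgroup_gen {(seqV p ^^ n) (teich p b) | n b. True}"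
    by (intro cg_sub[THEN subsetD] CollectI exI[of _ n] exI[of _ "Zmap f b"]) (simp add: eq)
qed

lemma Zmap_Iker: "cring_hom f \<Longrightarrow> a - b \<in> Iker \<Longrightarrow> Zmap f a - Zmap f b \<in> Iker"
  by (simp add: Iker_def ch_diff[OF Zmap_hom, symmetric] peval_Zmap ch_0)

lemma Zs_XI:
  fixes f :: "'r::comm_ring_1 \<Rightarrow> 's::comm_ring_1" and c :: "nat \<Rightarrow> 'r zpoly"
  shows "cring_hom f \<Longrightarrow> c \<in> XIgrp p \<Longrightarrow> Zs f c \<in> XIgrp p"
  unfolding XIgrp_def
proof (rule cg_hom[OF Zs_add Zs_cont])
  assume f: "cring_hom f"
  fix s assume "s \<in> {(\<lambda>i. (seqV p ^^ n) (teich p a) i - (seqV p ^^ n) (teich p b) i) | n a b.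
        a - b \<in> (Iker :: 'r zpoly set)}"
  then obtain n a b where s: "s = (\<lambda>i. (seqV p ^^ n) (teich p a) i - (seqV p ^^ n) (teich p b) i)"
    and ab: "a - b \<in> Iker" by blast
  have eq: "Zs f s = (\<lambda>i. (seqV p ^^ n) (teich p (Zmap f a)) i - (seqV p ^^ n) (teich p (Zmap f b)) i)"
    by (simp add: s seqadd_diff[OF Zs_add] Zs_Vpow Zs_teich)
  show "Zs f s \<in> closed_subgroup_gen {(\<lambda>i. (seqV p ^^ n) (teich p a) i - (seqV p ^^ n) (teich p b) i) | n a b.
        a - b \<in> (Iker :: 's zpoly set)}"
    by (intro cg_sub[THEN subsetD] CollectI exI[of _ n] exI[of _ "Zmap f a"] exI[of _ "Zmap f b"])
       (simp add: eq Zmap_Iker[OF f ab])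
qed

lemma Emap_Ecos:
  assumes f: "cring_hom f"
  shows "Emap p f (Ecos p c) = Ecos p (Zs f c)"
proof -
  have "z \<in> Emap p f (Ecos p c) \<longleftrightarrow> z \<in> Ecos p (Zs f c)" for z
  proof
    assume "z \<in> Emap p f (Ecos p c)"
    then obtain c' y where z: "z = (\<lambda>i. Zmap f (c' i) + y i)" and c': "c' \<in> Ecos p c" and y: "y \<in> XIgrp p"
      by (auto simp: Emap_def)
    have "(\<lambda>i. z i - Zs f c i) = (\<lambda>i. Zs f (\<lambda>i. c' i - c i) i + y i)"
      by (simp add: z Zs_def ch_diff[OF Zmap_hom] algebra_simps)
    then show "z \<in> Ecos p (Zs f c)"
      using c' y by (simp add: Ecos_mem XI_add Zs_XI[OF f])
  next
    assume a: "z \<in> Ecos p (Zs f c)"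
    then have "(\<lambda>i. z i - Zs f c i) \<in> XIgrp p" by (simp add: Ecos_mem)
    then have "\<exists>ca y. z = (\<lambda>i. Zmap f (ca i) + y i) \<and> ca \<in> Ecos p c \<and> y \<in> XIgrp p"
      using Ecos_self[of c p] by (intro exI[of _ c] exI[of _ "\<lambda>i. z i - Zs f c i"]) (simp add: Zs_def)
    then show "z \<in> Emap p f (Ecos p c)" by (simp add: Emap_def)
  qed
  then show ?thesis by blast
qed

lemma Emap_hom: "cring_hom f \<Longrightarrow> Emap p f \<in> hom (E p) (E p)"
  by (rule homI) (auto simp: E_carrier Emap_Ecos Ecos_mult Zs_X X_add seqadd_D[OF Zs_add])

lemma Emap_EV: "cring_hom f \<Longrightarrow> C \<in> carrier (E p) \<Longrightarrow> Emap p f (EV p C) = EV p (Emap p f C)"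
  by (auto simp: E_carrier Emap_Ecos EV_Ecos Zs_seqV)

lemma Emap_Eteich: "cring_hom f \<Longrightarrow> Emap p f (Eteich p x) = Eteich p (f x)"
  by (simp add: Eteich_def Emap_Ecos Zs_teich)

lemma Emap_id: "C \<in> carrier (E p) \<Longrightarrow> Emap p id C = C"
  by (auto simp: E_carrier Emap_Ecos[OF ch_id] Zs_def Zmap_id)

lemma Emap_comp: "cring_hom f \<Longrightarrow> cring_hom g \<Longrightarrow> C \<in> carrier (E p) \<Longrightarrow> Emap p (g \<circ> f) C = Emap p g (Emap p f C)"
  by (auto simp: E_carrier Emap_Ecos ch_comp Zs_def Zmap_comp)


lemma X_smul: "x \<in> Xgrp p \<Longrightarrow> (\<lambda>i. of_nat n * x i) \<in> Xgrp p" unfolding Xgrp_def by (rule cg_smul)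

lemma teich_zero: "p > 0 \<Longrightarrow> teich p 0 = (\<lambda>_. 0)"
  by (simp add: teich_def fun_eq_iff power_0_left)

lemma seqV_zero: "seqV p (\<lambda>_. 0) = (\<lambda>_. 0)"
  by (simp add: seqV_def fun_eq_iff)

lemma Iker_iff: "a \<in> Iker \<longleftrightarrow> peval id a = 0"
  by (simp add: Iker_def)

lemma XI_gen0: "a - b \<in> Iker \<Longrightarrow> (\<lambda>i. teich p a i - teich p b i) \<in> XIgrp p"
  using XI_gen[where n=0 and a=a and b=b and p=p] by simp

lemma XI_gen1: "a - b \<in> Iker \<Longrightarrow> (\<lambda>i. seqV p (teich p a) i - seqV p (teich p b) i) \<in> XIgrp p"
  using XI_gen[where n=1 and a=a and b=b and p=p] by simp

lemma Eteich_0: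
  assumes "p > 0" shows "Eteich p 0 = \<one>\<^bsub>E p\<^esub>"
proof -
  have "pvar 0 - 0 \<in> Iker" by (simp add: Iker_iff)
  from XI_gen0[OF this, of p] have "(\<lambda>i. teich p (pvar 0) i - 0) \<in> XIgrp p"
    using assms by (simp add: teich_zero)
  then show ?thesis by (simp add: Eteich_def E_one Ecos_eq)
qed

lemma Eteich_neg:
  assumes "odd p" shows "Eteich p (- x) = inv\<^bsub>E p\<^esub> (Eteich p x)"
proof -
  have t: "teich p (- u) = (\<lambda>i. - teich p u i)" for u :: "'a zpoly"
    using assms by (simp add: teich_def fun_eq_iff power_minus_odd)
  have "pvar (- x) - (- pvar x) \<in> Iker" by (simp add: Iker_iff peval_diff peval_uminus peval_add)
  from XI_gen0[OF this, of p] have "(\<lambda>i. teich p (pvar (- x)) i - - teich p (pvar x) i) \<in> XIgrp p"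
    by (simp add: t)
  then show ?thesis
    using teich_X[of 0 p "pvar x"]
    by (simp add: Eteich_def E_inv Ecos_eq)
qed

lemma seqV_teich_pow:
  "seqV p (teich p (u ^ p)) i = of_nat p * teich p u i + (if i = 0 then - (of_nat p * u) else 0)"
  by (cases i) (simp_all add: seqV_apply teich_def power_mult[symmetric] mult.commute)

lemma delta_XI:
  assumes p: "p > 0" and c: "c \<in> Iker"
  shows "(\<lambda>i. if i = 0 then of_nat p * c else 0) \<in> XIgrp p"
proof -
  have "c ^ p - 0 \<in> Iker" using c p by (simp add: Iker_iff ch_power[OF peval_hom] power_0_left)
  from XI_gen1[OF this, of p] have A: "(\<lambda>i. seqV p (teich p (c ^ p)) i) \<in> XIgrp p"
    using p by (simp add: teich_zero seqV_zero)
  have "c - 0 \<in> Iker" using c by simp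
  from XI_gen0[OF this, of p] have "(\<lambda>i. teich p c i) \<in> XIgrp p"
    using p by (simp add: teich_zero)
  then have B: "(\<lambda>i. of_nat p * teich p c i) \<in> XIgrp p" by (rule XI_smul)
  have "(\<lambda>i. - (seqV p (teich p (c ^ p)) i - of_nat p * teich p c i)) \<in> XIgrp p"
    using XI_neg[OF XI_diff[OF A B]] by simp
  moreover have "(\<lambda>i. - (seqV p (teich p (c ^ p)) i - of_nat p * teich p c i)) = (\<lambda>i. if i = 0 then of_nat p * c else 0)"
    by (simp add: seqV_teich_pow fun_eq_iff)
  ultimately show ?thesis by simp
qed

lemma Wterm:
  "EV p (Eteich p (z ^ p)) \<otimes>\<^bsub>E p\<^esub> inv\<^bsub>E p\<^esub> (Eteich p z [^]\<^bsub>E p\<^esub> p)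
     = Ecos p (\<lambda>i. seqV p (teich p (pvar (z ^ p))) i - of_nat p * teich p (pvar z) i)"
proof -
  have t: "teich p (pvar z) \<in> Xgrp p" using teich_X[of 0 p "pvar z"] by simp
  show ?thesis
    by (simp add: Eteich_def E_pow[OF t] E_inv[OF X_smul[OF t]] EV_Ecos Ecos_mult)
qed

lemma additivity:
  fixes x y :: "'r::comm_ring_1"
  assumes p: "p > 0"
  shows "EV p (Eteich p ((x + y) ^ p)) \<otimes>\<^bsub>E p\<^esub> inv\<^bsub>E p\<^esub> (Eteich p (x + y) [^]\<^bsub>E p\<^esub> p)
        = (EV p (Eteich p (x ^ p)) \<otimes>\<^bsub>E p\<^esub> inv\<^bsub>E p\<^esub> (Eteich p x [^]\<^bsub>E p\<^esub> p))
          \<otimes>\<^bsub>E p\<^esub> (EV p (Eteich p (y ^ p)) \<otimes>\<^bsub>E p\<^esub> inv\<^bsub>E p\<^esub> (Eteich p y [^]\<^bsub>E p\<^esub> p))"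
proof -
  let ?B = "pvar (x + y) :: 'r zpoly" and ?X = "pvar x :: 'r zpoly" and ?Y = "pvar y :: 'r zpoly"
  let ?T = "\<lambda>u i. seqV p (teich p u) i"
  let ?G1 = "\<lambda>i. ?T (pvar ((x + y) ^ p)) i - ?T (?B ^ p) i"
  let ?G2 = "\<lambda>i. ?T (pvar (x ^ p)) i - ?T (?X ^ p) i"
  let ?G3 = "\<lambda>i. ?T (pvar (y ^ p)) i - ?T (?Y ^ p) i"
  let ?D = "\<lambda>i. if i = 0 then of_nat p * (?B - ?X - ?Y) else 0"
  have g1: "?G1 \<in> XIgrp p"
    by (rule XI_gen1) (simp add: Iker_iff peval_diff ch_power[OF peval_hom])
  have g2: "?G2 \<in> XIgrp p"
    by (rule XI_gen1) (simp add: Iker_iff peval_diff ch_power[OF peval_hom])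
  have g3: "?G3 \<in> XIgrp p"
    by (rule XI_gen1) (simp add: Iker_iff peval_diff ch_power[OF peval_hom])
  have d: "?D \<in> XIgrp p"
    by (rule delta_XI[OF p]) (simp add: Iker_iff peval_diff)
  have "(\<lambda>i. (?G1 i - ?G2 i - ?G3 i) - ?D i) \<in> XIgrp p"
    by (rule XI_diff[OF XI_diff[OF XI_diff[OF g1 g2] g3] d])
  moreover have "(\<lambda>i. (?T (pvar ((x + y) ^ p)) i - of_nat p * teich p ?B i)
       - ((?T (pvar (x ^ p)) i - of_nat p * teich p ?X i) + (?T (pvar (y ^ p)) i - of_nat p * teich p ?Y i)))
      = (\<lambda>i. (?G1 i - ?G2 i - ?G3 i) - ?D i)"
    by (rule ext) (simp add: seqV_teich_pow algebra_simps)
  ultimately show ?thesis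
    by (simp add: Wterm Ecos_mult Ecos_eq)
qed


lemma seqclosedD: "seqclosed H \<Longrightarrow> (\<And>n. \<exists>h\<in>H. \<forall>i<n. h i = x i) \<Longrightarrow> x \<in> H"
  unfolding seqclosed_def by blast

lemma Vpow_X: "x \<in> Xgrp p \<Longrightarrow> (seqV p ^^ n) x \<in> Xgrp p"
  by (induction n) (simp_all add: seqV_X)

definition psum :: "nat \<Rightarrow> (nat \<Rightarrow> nat \<Rightarrow> 'b::comm_ring_1) \<Rightarrow> nat \<Rightarrow> nat \<Rightarrow> 'b" where
  "psum p z m i = (\<Sum>k<m. (seqV p ^^ k) (z k) i)"

definition ser :: "nat \<Rightarrow> (nat \<Rightarrow> nat \<Rightarrow> 'b::comm_ring_1) \<Rightarrow> nat \<Rightarrow> 'b" where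
  "ser p z i = psum p z (Suc i) i"

lemma psum_stable: "i < m \<Longrightarrow> psum p z m i = psum p z (Suc i) i"
  unfolding psum_def
  by (rule sum.mono_neutral_right) (auto simp: seqV_pow)

lemma psum_X: "(\<And>k. z k \<in> Xgrp p) \<Longrightarrow> (\<lambda>i. psum p z m i) \<in> Xgrp p"
proof (induction m)
  case 0 then show ?case using X_0 by (simp add: psum_def)
next
  case (Suc m)
  have "(\<lambda>i. psum p z m i + (seqV p ^^ m) (z m) i) \<in> Xgrp p"
    by (rule X_add[OF Suc.IH[OF Suc.prems] Vpow_X[OF Suc.prems]])
  then show ?case by (simp add: psum_def)
qed

lemma ser_X:
  assumes z: "\<And>k. z k \<in> Xgrp p" shows "ser p z \<in> Xgrp p"
proof -
  show ?thesis
  proof (rule seqclosedD[OF X_closed])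
    fix n show "\<exists>h\<in>Xgrp p. \<forall>i<n. h i = ser p z i"
      using psum_stable[of _ n p z] by (intro bexI[OF _ psum_X[where z=z and m=n, OF z]]) (simp add: ser_def)
  qed
qed

lemma ser_tail:
  "(\<lambda>i. ser p z i - psum p z n i) = (seqV p ^^ n) (ser p (\<lambda>j. z (n + j)))"
proof (rule ext)
  fix i
  show "ser p z i - psum p z n i = (seqV p ^^ n) (ser p (\<lambda>j. z (n + j))) i"
  proof (cases "i < n")
    case True then show ?thesis using psum_stable[OF True, of p z] by (simp add: seqV_pow ser_def)
  next
    case False
    define j where "j = i - n"
    have i: "i = n + j" using False by (simp add: j_def)
    have "ser p z i = (\<Sum>k\<in>{0..<n}. (seqV p ^^ k) (z k) i) + (\<Sum>k\<in>{n..<Suc i}. (seqV p ^^ k) (z k) i)"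
      unfolding ser_def psum_def lessThan_atLeast0
      by (rule sum.atLeastLessThan_concat[symmetric]) (use False in auto)
    also have "(\<Sum>k\<in>{0..<n}. (seqV p ^^ k) (z k) i) = psum p z n i"
      by (simp add: psum_def lessThan_atLeast0)
    also have "(\<Sum>k\<in>{n..<Suc i}. (seqV p ^^ k) (z k) i) = (\<Sum>k\<in>{0..<Suc j}. (seqV p ^^ (k + n)) (z (k + n)) i)"
      using sum.shift_bounds_nat_ivl[of "\<lambda>k. (seqV p ^^ k) (z k) i" 0 n "Suc j"] by (simp add: i add.commute)
    also have "\<dots> = (seqV p ^^ n) (ser p (\<lambda>j. z (n + j))) i"
      by (simp add: seqV_pow ser_def psum_def i lessThan_atLeast0 power_add add.commute)
         (simp add: distrib_left sum_distrib_left mult_ac)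
    finally show ?thesis by simp
  qed
qed

lemma E_hausdorff: "(\<Inter>n. (EV p ^^ n) ` carrier (E p)) = {\<one>\<^bsub>E p\<^esub>}"
proof
  show "{\<one>\<^bsub>E p\<^esub>} \<subseteq> (\<Inter>n. (EV p ^^ n) ` carrier (E p))"
  proof (clarify)
    fix n
    have z0: "(seqV p ^^ n) (\<lambda>_. 0) = (\<lambda>_. 0)" by (simp add: fun_eq_iff seqV_pow)
    have "(EV p ^^ n) (Ecos p (\<lambda>_. 0)) = Ecos p (\<lambda>_. 0)"
      unfolding EV_pow_Ecos z0 ..
    then show "\<one>\<^bsub>E p\<^esub> \<in> (EV p ^^ n) ` carrier (E p)"
      using X_0 by (auto simp: E_one E_carrier intro!: image_eqI[of _ _ "Ecos p (\<lambda>_. 0)"])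
  qed
next
  show "(\<Inter>n. (EV p ^^ n) ` carrier (E p)) \<subseteq> {\<one>\<^bsub>E p\<^esub>}"
  proof
    fix C assume C: "C \<in> (\<Inter>n. (EV p ^^ n) ` carrier (E p))"
    then have "C \<in> (EV p ^^ 0) ` carrier (E p)" by blast
    then have "C \<in> carrier (E p)" by simp
    then obtain c where c: "c \<in> Xgrp p" "C = Ecos p c" by (auto simp: E_carrier)
    have "c \<in> XIgrp p"
    proof (rule seqclosedD[OF XI_closed])
      fix n
      from C have "C \<in> (EV p ^^ n) ` carrier (E p)" by blast
      then obtain w where w: "w \<in> Xgrp p" "C = Ecos p ((seqV p ^^ n) w)"
        by (auto simp: E_carrier EV_pow_Ecos)
      then have "(\<lambda>i. c i - (seqV p ^^ n) w i) \<in> XIgrp p" using c by (simp add: Ecos_eq)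
      then show "\<exists>h\<in>XIgrp p. \<forall>i<n. h i = c i"
        by (intro bexI) (auto simp: seqV_pow)
    qed
    then show "C \<in> {\<one>\<^bsub>E p\<^esub>}" using c by (simp add: E_one Ecos_eq)
  qed
qed

lemma E_complete:
  assumes x: "\<forall>n. x n \<in> carrier (E p) \<and> x (Suc n) \<otimes>\<^bsub>E p\<^esub> inv\<^bsub>E p\<^esub> (x n) \<in> (EV p ^^ n) ` carrier (E p)"
  shows "\<exists>y\<in>carrier (E p). \<forall>n. y \<otimes>\<^bsub>E p\<^esub> inv\<^bsub>E p\<^esub> (x n) \<in> (EV p ^^ n) ` carrier (E p)"
proof -
  interpret G: group "E p" by (rule E_group)
  have "x 0 \<in> Ecos p ` Xgrp p" using x by (simp add: E_carrier)
  then obtain c0 where c0: "c0 \<in> Xgrp p" "x 0 = Ecos p c0" by blast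
  have "\<forall>n. \<exists>w. w \<in> Xgrp p \<and> x (Suc n) \<otimes>\<^bsub>E p\<^esub> inv\<^bsub>E p\<^esub> (x n) = Ecos p ((seqV p ^^ n) w)"
    using x by (fastforce simp: E_carrier EV_pow_Ecos)
  then obtain z where z: "\<And>n. z n \<in> Xgrp p"
    "\<And>n. x (Suc n) \<otimes>\<^bsub>E p\<^esub> inv\<^bsub>E p\<^esub> (x n) = Ecos p ((seqV p ^^ n) (z n))"
    by metis
  have xc: "x n = Ecos p (\<lambda>i. c0 i + psum p z n i)" for n
  proof (induction n)
    case 0 then show ?case using c0 by (simp add: psum_def)
  next
    case (Suc n)
    have xn: "x n \<in> carrier (E p)" "x (Suc n) \<in> carrier (E p)" using x by auto
    have "x (Suc n) = (x (Suc n) \<otimes>\<^bsub>E p\<^esub> inv\<^bsub>E p\<^esub> (x n)) \<otimes>\<^bsub>E p\<^esub> x n"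
      using xn by (simp add: G.m_assoc)
    also have "\<dots> = Ecos p (\<lambda>i. (seqV p ^^ n) (z n) i + (c0 i + psum p z n i))"
      by (simp only: z(2)) (simp add: Suc.IH Ecos_mult)
    also have "\<dots> = Ecos p (\<lambda>i. c0 i + psum p z (Suc n) i)"
      by (simp add: psum_def algebra_simps)
    finally show ?case .
  qed
  let ?y = "Ecos p (\<lambda>i. c0 i + ser p z i)"
  have yc: "?y \<in> carrier (E p)"
    using X_add[OF c0(1) ser_X[OF z(1)]] by (simp add: E_carrier)
  have "?y \<otimes>\<^bsub>E p\<^esub> inv\<^bsub>E p\<^esub> (x n) \<in> (EV p ^^ n) ` carrier (E p)" for n
  proof -
    have pX: "(\<lambda>i. c0 i + psum p z n i) \<in> Xgrp p" by (rule X_add[OF c0(1) psum_X[OF z(1)]])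
    have "?y \<otimes>\<^bsub>E p\<^esub> inv\<^bsub>E p\<^esub> (x n) = Ecos p (\<lambda>i. ser p z i - psum p z n i)"
      by (simp add: xc E_inv[OF pX] Ecos_mult algebra_simps)
    also have "\<dots> = (EV p ^^ n) (Ecos p (ser p (\<lambda>j. z (n + j))))"
      by (simp add: ser_tail EV_pow_Ecos)
    finally show ?thesis
      using ser_X[of "\<lambda>j. z (n + j)" p] z(1) by (auto simp: E_carrier)
  qed
  then show ?thesis using yc by blast
qed

lemma E_filt_complete: "filt_complete (E p) (EV p)"
  unfolding filt_complete_def
proof (rule conjI[OF E_hausdorff], rule allI, rule impI)
  fix x :: "nat \<Rightarrow> 'a Eelt"
  assume "\<forall>n. x n \<in> carrier (E p) \<and> x (Suc n) \<otimes>\<^bsub>E p\<^esub> inv\<^bsub>E p\<^esub> (x n) \<in> (EV p ^^ n) ` carrier (E p)"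
  then show "\<exists>y\<in>carrier (E p). \<forall>n. y \<otimes>\<^bsub>E p\<^esub> inv\<^bsub>E p\<^esub> (x n) \<in> (EV p ^^ n) ` carrier (E p)"
    by (rule E_complete)
qed


lemma freshman_dvd:
  fixes a b :: "'a::comm_ring_1"
  assumes p: "Factorial_Ring.prime (p::nat)"
  shows "(of_nat p :: 'a) dvd ((a + b) ^ p - a ^ p - b ^ p)"
proof -
  let ?f = "\<lambda>k. of_nat (p choose k) * a ^ k * b ^ (p - k) :: 'a"
  have p0: "p \<noteq> 0" using p by auto
  have "(a + b) ^ p = (\<Sum>k\<in>{..p}. ?f k)" by (rule binomial_ring)
  also have "\<dots> = (\<Sum>k\<in>{..p} - {0, p}. ?f k) + (\<Sum>k\<in>{0, p}. ?f k)"
    by (rule sum.subset_diff) auto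
  also have "(\<Sum>k\<in>{0, p}. ?f k) = b ^ p + a ^ p" using p0 by simp
  finally have e: "(a + b) ^ p - a ^ p - b ^ p = (\<Sum>k\<in>{..p} - {0, p}. ?f k)" by simp
  have "(of_nat p :: 'a) dvd (\<Sum>k\<in>{..p} - {0, p}. ?f k)"
  proof (rule dvd_sum)
    fix k assume k: "k \<in> {..p} - {0, p}"
    then have "p dvd (p choose k)" using p p0 by (intro dvd_choose_prime) auto
    then obtain m where m: "p choose k = p * m" by blast
    show "(of_nat p :: 'a) dvd ?f k" by (simp add: m mult.assoc)
  qed
  then show ?thesis by (simp add: e)
qed

lemma pow_diff_dvd: "(u - v :: 'a::comm_ring_1) dvd (u ^ j - v ^ j)"
  by (simp add: power_diff_sumr2)

lemma dwork_step:
  fixes u v :: "'a::comm_ring_1"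
  assumes k: "k \<ge> 1" and d: "(of_nat p :: 'a) ^ k dvd (u - v)"
  shows "(of_nat p :: 'a) ^ Suc k dvd (u ^ p - v ^ p)"
proof -
  let ?S = "\<Sum>i<p. v ^ (p - Suc i) * u ^ i"
  have uv: "(of_nat p :: 'a) dvd (u - v)"
  proof -
    have "(of_nat p :: 'a) dvd of_nat p ^ k" using k by (intro dvd_power) auto
    then show ?thesis using d by (rule dvd_trans)
  qed
  have "?S = (\<Sum>i<p. v ^ (p - 1)) + (\<Sum>i<p. v ^ (p - Suc i) * (u ^ i - v ^ i))"
  proof -
    have "v ^ (p - Suc i) * u ^ i = v ^ (p - 1) + v ^ (p - Suc i) * (u ^ i - v ^ i)" if "i < p" for i
    proof -
      have "v ^ (p - Suc i) * v ^ i = v ^ (p - 1)"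
        using that by (simp add: power_add[symmetric])
      then show ?thesis by (simp add: algebra_simps)
    qed
    then show ?thesis by (simp add: sum.distrib)
  qed
  also have "(\<Sum>i<p. v ^ (p - 1)) = of_nat p * v ^ (p - 1)" by simp
  finally have S: "?S = of_nat p * v ^ (p - 1) + (\<Sum>i<p. v ^ (p - Suc i) * (u ^ i - v ^ i))" .
  have "(of_nat p :: 'a) dvd ?S"
    unfolding S
    by (intro dvd_add dvd_mult2 dvd_sum dvd_mult dvd_trans[OF uv pow_diff_dvd]) simp
  then have "(of_nat p :: 'a) ^ k * of_nat p dvd (u - v) * ?S"
    by (rule mult_dvd_mono[OF d])
  then show ?thesis by (simp add: power_diff_sumr2 mult.commute)
qed

lemma dwork_iter:
  fixes u v :: "'a::comm_ring_1"
  assumes "(of_nat p :: 'a) dvd (u - v)"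
  shows "(of_nat p :: 'a) ^ Suc n dvd (u ^ (p ^ n) - v ^ (p ^ n))"
proof (induction n)
  case 0 then show ?case using assms by simp
next
  case (Suc n)
  have "(of_nat p :: 'a) ^ Suc (Suc n) dvd ((u ^ (p ^ n)) ^ p - (v ^ (p ^ n)) ^ p)"
    by (rule dwork_step[OF _ Suc.IH]) simp
  then show ?case by (simp add: power_mult[symmetric] mult.commute)
qed

lemma fermat_ring:
  assumes p: "Factorial_Ring.prime (p::nat)"
  shows "(of_nat p :: 'a::comm_ring_1) dvd ((of_int c :: 'a) ^ p - of_int c)"
proof -
  let ?Q = "\<lambda>x::'a. (of_nat p :: 'a) dvd (x ^ p - x)"
  have p0: "p > 0" using p prime_gt_0_nat by blast
  have add: "?Q (x + y)" if "?Q x" "?Q y" for x y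
  proof -
    have e: "(x + y) ^ p - (x + y) = ((x + y) ^ p - x ^ p - y ^ p) + (x ^ p - x) + (y ^ p - y)"
      by (simp add: algebra_simps)
    show ?thesis unfolding e using that freshman_dvd[OF p, of x y] by (intro dvd_add)
  qed
  have neg: "?Q (- x)" if "?Q x" for x
  proof (cases "odd p")
    case True
    then have e: "(- x) ^ p - (- x) = - (x ^ p - x)" by (simp add: power_minus_odd)
    show ?thesis unfolding e dvd_minus_iff using that .
  next
    case False
    have "\<not> p > 2" using False prime_odd_nat[OF p] by blast
    moreover have "p \<ge> 2" using prime_ge_2_nat[OF p] .
    ultimately have "p = 2" by linarith
    then have e: "(- x) ^ p - (- x) = (x ^ p - x) + of_nat p * x" by (simp add: algebra_simps power2_eq_square)
    show ?thesis unfolding e using that by (intro dvd_add) auto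
  qed
  have nat: "?Q (of_nat n)" for n
  proof (induction n)
    case 0 then show ?case using p0 by (simp add: power_0_left)
  next
    case (Suc n)
    have "?Q 1" by simp
    then show ?case using add[OF Suc.IH] by (simp add: add.commute)
  qed
  show ?thesis
  proof (cases "c \<ge> 0")
    case True then show ?thesis using nat[of "nat c"] by simp
  next
    case False
    then have "of_int c = - (of_nat (nat (- c)) :: 'a)" by simp
    then show ?thesis using neg[OF nat[of "nat (- c)"]] by simp
  qed
qed

definition frob :: "nat \<Rightarrow> 'r zpoly \<Rightarrow> 'r zpoly" where
  "frob p = peval (\<lambda>v. pvar v ^ p)"

lemma frob_hom: "cring_hom (frob p)"
  by (simp add: frob_def peval_hom)

lemma frob_cong:
  assumes p: "Factorial_Ring.prime (p::nat)"
  shows "(of_nat p :: 'r zpoly) dvd (frob p a - a ^ p)"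
proof (induction a rule: zpoly_induct)
  case (1 c)
  have e: "frob p (of_int c) - of_int c ^ p = - ((of_int c :: 'r zpoly) ^ p - of_int c)"
    by (simp add: ch_of_int[OF frob_hom])
  show ?case unfolding e dvd_minus_iff by (rule fermat_ring[OF p])
next
  case (2 v) then show ?case by (simp add: frob_def)
next
  case (3 x y)
  have e: "frob p (x + y) - (x + y) ^ p = (frob p x - x ^ p) + (frob p y - y ^ p) - ((x + y) ^ p - x ^ p - y ^ p)"
    by (simp add: ch_add[OF frob_hom] algebra_simps)
  show ?case unfolding e by (rule dvd_diff[OF dvd_add[OF 3(1) 3(2)] freshman_dvd[OF p]])
next
  case (4 x y)
  have e: "frob p (x * y) - (x * y) ^ p = (frob p x - x ^ p) * frob p y + x ^ p * (frob p y - y ^ p)"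
    by (simp add: ch_mult[OF frob_hom] power_mult_distrib algebra_simps)
  show ?case unfolding e by (rule dvd_add[OF dvd_mult2[OF 4(1)] dvd_mult[OF 4(2)]])
qed


definition Dset :: "nat \<Rightarrow> (nat \<Rightarrow> 'r zpoly) set" where
  "Dset p = {x. \<forall>n. (of_nat p :: 'r zpoly) ^ Suc n dvd (x (Suc n) - frob p (x n))}"

lemma D_iff: "x \<in> Dset p \<longleftrightarrow> (\<forall>n. (of_nat p :: 'r zpoly) ^ Suc n dvd (x (Suc n) - frob p (x n)))"
  by (simp add: Dset_def)

lemma D_0: "(\<lambda>_. 0) \<in> Dset p"
  by (simp add: D_iff ch_0[OF frob_hom])

lemma D_add: "x \<in> Dset p \<Longrightarrow> y \<in> Dset p \<Longrightarrow> (\<lambda>i. x i + y i) \<in> Dset p"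
proof -
  assume x: "x \<in> Dset p" and y: "y \<in> Dset p"
  have e: "x (Suc n) + y (Suc n) - frob p (x n + y n) = (x (Suc n) - frob p (x n)) + (y (Suc n) - frob p (y n))" for n
    by (simp add: ch_add[OF frob_hom])
  show ?thesis using x y unfolding D_iff e by (blast intro: dvd_add)
qed

lemma D_neg: "x \<in> Dset p \<Longrightarrow> (\<lambda>i. - x i) \<in> Dset p"
proof -
  assume x: "x \<in> Dset p"
  have e: "- x (Suc n) - frob p (- x n) = - (x (Suc n) - frob p (x n))" for n
    by (simp add: ch_uminus[OF frob_hom])
  show ?thesis using x unfolding D_iff e dvd_minus_iff .
qed

lemma D_diff: "x \<in> Dset p \<Longrightarrow> y \<in> Dset p \<Longrightarrow> (\<lambda>i. x i - y i) \<in> Dset p"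
  using D_add[OF _ D_neg[of y p], of x] by simp

lemma D_closed: "seqclosed (Dset p)"
  unfolding seqclosed_def
proof (intro allI impI)
  fix x :: "nat \<Rightarrow> 'a zpoly" assume a: "\<forall>n. \<exists>h\<in>Dset p. \<forall>i<n. h i = x i"
  show "x \<in> Dset p" unfolding D_iff
  proof
    fix n
    obtain h where h: "h \<in> Dset p" "\<forall>i<Suc (Suc n). h i = x i" using a by blast
    then have "h (Suc n) = x (Suc n)" "h n = x n" by auto
    then show "(of_nat p :: 'a zpoly) ^ Suc n dvd (x (Suc n) - frob p (x n))"
      using h(1) unfolding D_iff by metis
  qed
qed

lemma teich_D:
  assumes p: "Factorial_Ring.prime (p::nat)"
  shows "teich p a \<in> Dset p"
  unfolding D_iff
proof
  fix n
  have "(of_nat p :: 'a zpoly) dvd (a ^ p - frob p a)"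
  proof -
    have "a ^ p - frob p a = - (frob p a - a ^ p)" by simp
    then show ?thesis using frob_cong[OF p, of a] by (simp only: dvd_minus_iff)
  qed
  from dwork_iter[OF this, of n]
  show "(of_nat p :: 'a zpoly) ^ Suc n dvd (teich p a (Suc n) - frob p (teich p a n))"
    by (simp add: teich_def ch_power[OF frob_hom] power_mult[symmetric])
qed

lemma frob_pmul: "frob p (of_nat p * y) = of_nat p * frob p y"
  by (simp add: ch_mult[OF frob_hom] ch_of_nat[OF frob_hom])

lemma seqV_D:
  assumes x: "x \<in> Dset p" shows "seqV p x \<in> Dset p"
  unfolding D_iff
proof
  fix n
  show "(of_nat p :: 'a zpoly) ^ Suc n dvd (seqV p x (Suc n) - frob p (seqV p x n))"
  proof (cases n)
    case 0 then show ?thesis by (simp add: seqV_apply ch_0[OF frob_hom])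
  next
    case (Suc m)
    have e: "seqV p x (Suc n) - frob p (seqV p x n) = of_nat p * (x (Suc m) - frob p (x m))"
      by (simp add: Suc seqV_apply frob_pmul algebra_simps)
    have "(of_nat p :: 'a zpoly) * of_nat p ^ Suc m dvd of_nat p * (x (Suc m) - frob p (x m))"
      using x unfolding D_iff by (intro mult_dvd_mono) auto
    then show ?thesis unfolding e by (simp add: Suc)
  qed
qed

lemma X_D:
  assumes p: "Factorial_Ring.prime (p::nat)"
  shows "Xgrp p \<subseteq> Dset p"
  unfolding Xgrp_def
proof (rule cg_min)
  show "add_subgroup (Dset p)" unfolding add_subgroup_def using D_0 D_add D_neg by blast
  show "seqclosed (Dset p)" by (rule D_closed)
  have g: "(seqV p ^^ n) (teich p b) \<in> Dset p" for n b
    by (induction n) (simp_all add: teich_D[OF p] seqV_D)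
  show "{(seqV p ^^ n) (teich p b) | n b. True} \<subseteq> Dset p"
    using g by blast
qed

lemma lookup_ofnat_mult:
  fixes v :: "'r zpoly"
  shows "Poly_Mapping.lookup (of_nat n * v) k = int n * Poly_Mapping.lookup v k"
proof -
  have "(of_nat n :: ('r \<Rightarrow>\<^sub>0 nat) \<Rightarrow>\<^sub>0 int) * v = Poly_Mapping.single 0 (of_nat n) * v" by simp
  also have "\<dots> = Poly_Mapping.map ((*) (of_nat n)) v" by (simp add: mult_map_scale_conv_mult)
  finally show ?thesis by (simp add: Poly_Mapping.map.rep_eq when_def)
qed

lemma zpoly_cancel:
  assumes p: "p > 0" and e: "(of_nat p :: 'r zpoly) * u = of_nat p * w"
  shows "u = w"
proof (rule poly_mapping_eqI)
  fix k
  have "Poly_Mapping.lookup (of_nat p * u) k = Poly_Mapping.lookup (of_nat p * w) k" using e by simp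
  then show "Poly_Mapping.lookup u k = Poly_Mapping.lookup w k" using p by (simp add: lookup_ofnat_mult)
qed

lemma dvd_cancel:
  assumes p: "p > 0" and d: "(of_nat p :: 'r zpoly) ^ Suc k dvd (of_nat p * u)"
  shows "(of_nat p :: 'r zpoly) ^ k dvd u"
proof -
  obtain w where "of_nat p * u = (of_nat p :: 'r zpoly) ^ Suc k * w" using d by blast
  then have "of_nat p * u = (of_nat p :: 'r zpoly) * (of_nat p ^ k * w)" by (simp add: mult.assoc)
  then have "u = of_nat p ^ k * w" by (rule zpoly_cancel[OF p])
  then show ?thesis by simp
qed

definition INs :: "(nat \<Rightarrow> ('r::comm_ring_1) zpoly) set" where
  "INs = {x. \<forall>i. x i \<in> Iker}"

lemma Iker_p:
  assumes tf: "\<forall>r :: 'r::comm_ring_1. of_nat p * r = 0 \<longrightarrow> r = 0"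
    and u: "(of_nat p :: 'r zpoly) * u \<in> Iker"
  shows "u \<in> Iker"
  using u tf by (simp add: Iker_iff ch_mult[OF peval_hom] ch_of_nat[OF peval_hom])

lemma XI_IN: "XIgrp p \<subseteq> (INs :: (nat \<Rightarrow> ('r::comm_ring_1) zpoly) set)"
  unfolding XIgrp_def
proof (rule cg_min)
  show "add_subgroup (INs :: (nat \<Rightarrow> 'r zpoly) set)"
    unfolding add_subgroup_def INs_def
    by (simp add: Iker_iff peval_add peval_uminus)
  have cl: "x \<in> INs" if a: "\<forall>n. \<exists>h\<in>INs. \<forall>i<n. h i = x i" for x :: "nat \<Rightarrow> 'r zpoly"
  proof -
    have "x i \<in> Iker" for i
    proof -
      obtain h where h: "h \<in> INs" "\<forall>j<Suc i. h j = x j" using a by blast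
      then have hx: "h i = x i" by simp
      have "h i \<in> Iker" using h(1) by (simp add: INs_def)
      then show ?thesis using hx by simp
    qed
    then show ?thesis by (simp add: INs_def)
  qed
  show "seqclosed (INs :: (nat \<Rightarrow> 'r zpoly) set)" unfolding seqclosed_def
  proof (intro allI impI)
    fix x :: "nat \<Rightarrow> 'r zpoly" assume "\<forall>n. \<exists>h\<in>INs. \<forall>i<n. h i = x i"
    then show "x \<in> INs" by (rule cl)
  qed
  show "{(\<lambda>i. (seqV p ^^ n) (teich p a) i - (seqV p ^^ n) (teich p b) i) | n a b. a - b \<in> (Iker :: 'r zpoly set)} \<subseteq> INs"
  proof clarify
    fix n and a b :: "'r zpoly"
    assume "a - b \<in> Iker"
    then have ab: "peval id a = peval id b" by (simp add: Iker_iff peval_diff)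
    show "(\<lambda>i. (seqV p ^^ n) (teich p a) i - (seqV p ^^ n) (teich p b) i) \<in> INs"
      by (simp add: INs_def Iker_iff seqV_pow teich_def peval_diff ch_mult[OF peval_hom]
          ch_power[OF peval_hom] ch_of_nat[OF peval_hom] ab)
  qed
qed


lemma Vpow_zero: "(seqV p ^^ m) (\<lambda>_. 0) = (\<lambda>_. (0::'b::comm_ring_1))"
  by (simp add: fun_eq_iff seqV_pow)

lemma Iker_teich: "p > 0 \<Longrightarrow> a \<in> Iker \<Longrightarrow> teich p a i \<in> Iker"
  by (simp add: Iker_iff teich_def ch_power[OF peval_hom] power_0_left)

lemma step_decomp:
  fixes x :: "nat \<Rightarrow> ('r::comm_ring_1) zpoly"
  assumes p: "Factorial_Ring.prime (p::nat)"
    and tf: "\<forall>r :: 'r. of_nat p * r = 0 \<longrightarrow> r = 0"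
    and xD: "x \<in> Dset p" and xI: "x \<in> INs"
  shows "\<exists>a y. a \<in> Iker \<and> y \<in> Dset p \<and> y \<in> INs \<and> x = (\<lambda>i. teich p a i + seqV p y i)"
proof -
  have p0: "p > 0" using p prime_gt_0_nat by blast
  define a where "a = x 0"
  have aI: "a \<in> Iker" using xI by (simp add: INs_def a_def)
  define z where "z = (\<lambda>i. x i - teich p a i)"
  have zD: "z \<in> Dset p" unfolding z_def by (rule D_diff[OF xD teich_D[OF p]])
  have z0: "z 0 = 0" by (simp add: z_def a_def teich_def)
  have zI: "z i \<in> Iker" for i
    using xI Iker_teich[OF p0 aI, of i] by (simp add: z_def INs_def Iker_iff peval_diff)
  have zp: "(of_nat p :: 'r zpoly) dvd z (Suc n)" for n
  proof (induction n)
    case 0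
    have "(of_nat p :: 'r zpoly) ^ Suc 0 dvd (z (Suc 0) - frob p (z 0))" using zD by (simp only: D_iff)
    then show ?case by (simp add: z0 ch_0[OF frob_hom])
  next
    case (Suc n)
    have d1: "(of_nat p :: 'r zpoly) ^ Suc (Suc n) dvd (z (Suc (Suc n)) - frob p (z (Suc n)))"
      using zD by (simp only: D_iff)
    have "(of_nat p :: 'r zpoly) dvd of_nat p ^ Suc (Suc n)" by simp
    with d1 have d2: "(of_nat p :: 'r zpoly) dvd (z (Suc (Suc n)) - frob p (z (Suc n)))" by (rule dvd_trans[rotated])
    obtain w where w: "z (Suc n) = of_nat p * w" using Suc.IH by blast
    have d3: "(of_nat p :: 'r zpoly) dvd frob p (z (Suc n))" by (simp add: w frob_pmul)
    have "z (Suc (Suc n)) = (z (Suc (Suc n)) - frob p (z (Suc n))) + frob p (z (Suc n))" by simp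
    then show ?case using dvd_add[OF d2 d3] by simp
  qed
  define y where "y = (\<lambda>n. SOME w. z (Suc n) = of_nat p * w)"
  have y: "z (Suc n) = of_nat p * y n" for n
  proof -
    obtain w where "z (Suc n) = of_nat p * w" using zp[of n] by blast
    then show ?thesis unfolding y_def by (rule someI)
  qed
  have yI: "y \<in> INs"
    unfolding INs_def
  proof (rule CollectI, rule allI)
    fix n
    have "z (Suc n) \<in> Iker" by (rule zI)
    then have "of_nat p * y n \<in> Iker" by (simp only: y)
    then show "y n \<in> Iker" by (rule Iker_p[OF tf])
  qed
  have yD: "y \<in> Dset p"
    unfolding D_iff
  proof
    fix n
    have "(of_nat p :: 'r zpoly) ^ Suc (Suc n) dvd (z (Suc (Suc n)) - frob p (z (Suc n)))"
      using zD by (simp only: D_iff)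
    also have "z (Suc (Suc n)) - frob p (z (Suc n)) = of_nat p * (y (Suc n) - frob p (y n))"
      by (simp add: y frob_pmul algebra_simps)
    finally show "(of_nat p :: 'r zpoly) ^ Suc n dvd (y (Suc n) - frob p (y n))"
      by (rule dvd_cancel[OF p0])
  qed
  have "x = (\<lambda>i. teich p a i + seqV p y i)"
  proof
    fix i show "x i = teich p a i + seqV p y i"
    proof (cases i)
      case 0 then show ?thesis by (simp add: a_def teich_def seqV_apply)
    next
      case (Suc j)
      have "x i = teich p a i + z i" by (simp add: z_def)
      also have "z i = seqV p y i" by (simp add: Suc seqV_apply y)
      finally show ?thesis .
    qed
  qed
  then show ?thesis using aI yD yI by blast
qed

lemma D_IN_XI:
  fixes x :: "nat \<Rightarrow> ('r::comm_ring_1) zpoly"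
  assumes p: "Factorial_Ring.prime (p::nat)"
    and tf: "\<forall>r :: 'r. of_nat p * r = 0 \<longrightarrow> r = 0"
    and xD: "x \<in> Dset p" and xI: "x \<in> INs"
  shows "x \<in> XIgrp p"
proof -
  have p0: "p > 0" using p prime_gt_0_nat by blast
  let ?P = "\<lambda>w q. fst q \<in> Iker \<and> snd q \<in> Dset p \<and> snd q \<in> INs \<and> w = (\<lambda>i. teich p (fst q) i + seqV p (snd q) i)"
  define st where "st w = (SOME q. ?P w q)" for w :: "nat \<Rightarrow> 'r zpoly"
  have st: "?P w (st w)" if wD: "w \<in> Dset p" "w \<in> INs" for w
  proof -
    obtain a y where "a \<in> Iker \<and> y \<in> Dset p \<and> y \<in> INs \<and> w = (\<lambda>i. teich p a i + seqV p y i)"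
      using step_decomp[OF p tf wD] by blast
    then have "?P w (a, y)" by simp
    then show ?thesis unfolding st_def by (rule someI)
  qed
  define ys where "ys = rec_nat x (\<lambda>k w. snd (st w))"
  have ys0: "ys 0 = x" and ysS: "ys (Suc k) = snd (st (ys k))" for k by (simp_all add: ys_def)
  define as where "as k = fst (st (ys k))" for k
  have inv: "ys k \<in> Dset p \<and> ys k \<in> INs" for k
  proof (induction k)
    case 0 then show ?case using xD xI by (simp add: ys0)
  next
    case (Suc k) then show ?case using st[of "ys k"] by (simp add: ysS)
  qed
  have asI: "as k \<in> Iker" for k using st[of "ys k"] inv[of k] by (simp add: as_def)
  have ysE: "ys k = (\<lambda>i. teich p (as k) i + seqV p (ys (Suc k)) i)" for k
    using st[of "ys k"] inv[of k] by (simp add: as_def ysS)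
  have dec: "x i = (\<Sum>k<m. (seqV p ^^ k) (teich p (as k)) i) + (seqV p ^^ m) (ys m) i" for m i
  proof (induction m arbitrary: i)
    case 0 then show ?case by (simp add: ys0)
  next
    case (Suc m)
    have "(seqV p ^^ m) (ys m) i = (seqV p ^^ m) (teich p (as m)) i + (seqV p ^^ Suc m) (ys (Suc m)) i"
    proof -
      have "(seqV p ^^ m) (ys m) i = (seqV p ^^ m) (\<lambda>i. teich p (as m) i + seqV p (ys (Suc m)) i) i"
        by (subst ysE[of m]) (rule refl)
      also have "\<dots> = (seqV p ^^ m) (teich p (as m)) i + (seqV p ^^ m) (seqV p (ys (Suc m))) i"
        by (simp add: seqV_pow distrib_left)
      also have "(seqV p ^^ m) (seqV p (ys (Suc m))) = (seqV p ^^ Suc m) (ys (Suc m))"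
        by (simp only: funpow_Suc_right o_def)
      finally show ?thesis .
    qed
    then show ?case using Suc.IH[of i] by (simp add: add.assoc)
  qed
  have PXI: "(\<lambda>i. \<Sum>k<m. (seqV p ^^ k) (teich p (as k)) i) \<in> XIgrp p" for m
  proof (induction m)
    case 0 then show ?case using XI_0 by simp
  next
    case (Suc m)
    have "as m - 0 \<in> Iker" using asI by simp
    from XI_gen[OF this, of m p]
    have "(\<lambda>i. (seqV p ^^ m) (teich p (as m)) i) \<in> XIgrp p"
      using p0 by (simp add: teich_zero Vpow_zero)
    from XI_add[OF Suc.IH this] show ?case by simp
  qed
  show ?thesis
  proof (rule seqclosedD[OF XI_closed])
    fix n
    show "\<exists>h\<in>XIgrp p. \<forall>i<n. h i = x i"
      by (intro bexI[OF _ PXI[of n]]) (simp add: dec[of _ n] seqV_pow)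
  qed
qed

lemma E_torsion_free:
  assumes p: "Factorial_Ring.prime (p::nat)"
    and tf: "\<forall>a :: 'r::comm_ring_1. of_nat p * a = 0 \<longrightarrow> a = 0"
  shows "\<forall>e \<in> carrier (E p :: 'r Eelt monoid). e [^]\<^bsub>E p\<^esub> p = \<one>\<^bsub>E p\<^esub> \<longrightarrow> e = \<one>\<^bsub>E p\<^esub>"
proof (intro ballI impI)
  fix e assume e: "e \<in> carrier (E p :: 'r Eelt monoid)" and ep: "e [^]\<^bsub>E p\<^esub> p = \<one>\<^bsub>E p\<^esub>"
  obtain c where c: "c \<in> Xgrp p" "e = Ecos p c" using e by (auto simp: E_carrier)
  have "(\<lambda>i. of_nat p * c i) \<in> XIgrp p"
    using ep c by (simp add: E_pow E_one Ecos_eq)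
  then have "(\<lambda>i. of_nat p * c i) \<in> INs" using XI_IN by blast
  then have cI: "c \<in> INs" using Iker_p[OF tf] by (simp add: INs_def)
  have cD: "c \<in> Dset p" using X_D[OF p] c(1) by blast
  have "c \<in> XIgrp p" by (rule D_IN_XI[OF p tf cD cI])
  then show "e = \<one>\<^bsub>E p\<^esub>" using c by (simp add: E_one Ecos_eq)
qed


lemma Ecos_sub_X: "c \<in> Xgrp p \<Longrightarrow> Ecos p c \<subseteq> Xgrp p"
  using XI_sub_X by (auto simp: Ecos_def intro: X_add)

lemma Ecos_member_eq: "z \<in> Ecos p a \<Longrightarrow> Ecos p a = Ecos p z"
  unfolding Ecos_eq Ecos_mem
  by (drule XI_neg) simp

lemma Union_carrier: "\<Union>(carrier (E p)) = Xgrp p"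
  using Ecos_sub_X Ecos_self by (fastforce simp: E_carrier)

lemma Union_Int_cosets:
  assumes "U \<subseteq> carrier (E p)" "V \<subseteq> carrier (E p)"
  shows "\<Union>(U \<inter> V) = \<Union>U \<inter> \<Union>V"
proof
  show "\<Union>(U \<inter> V) \<subseteq> \<Union>U \<inter> \<Union>V" by blast
  show "\<Union>U \<inter> \<Union>V \<subseteq> \<Union>(U \<inter> V)"
  proof
    fix z assume "z \<in> \<Union>U \<inter> \<Union>V"
    then obtain A B where AB: "A \<in> U" "B \<in> V" "z \<in> A" "z \<in> B" by blast
    have "A \<in> Ecos p ` Xgrp p" "B \<in> Ecos p ` Xgrp p" using assms AB by (auto simp: E_carrier)
    then obtain a b where ab: "A = Ecos p a" "B = Ecos p b" by blast
    have "A = Ecos p z" using AB(3) ab(1) Ecos_member_eq by blast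
    moreover have "B = Ecos p z" using AB(4) ab(2) Ecos_member_eq by blast
    ultimately have "A = B" by simp
    then show "z \<in> \<Union>(U \<inter> V)" using AB by blast
  qed
qed

lemma Etop_istop: "istopology (\<lambda>U. U \<subseteq> carrier (E p :: ('r::comm_ring_1) Eelt monoid) \<and> openin (subtopology seq_top (Xgrp p)) (\<Union>U))"
proof -
  let ?L = "\<lambda>U. U \<subseteq> carrier (E p :: 'r Eelt monoid) \<and> openin (subtopology seq_top (Xgrp p)) (\<Union>U)"
  have 1: "?L (S \<inter> T)" if S: "?L S" and T: "?L T" for S T
  proof -
    have "\<Union>(S \<inter> T) = \<Union>S \<inter> \<Union>T" using Union_Int_cosets[of S p T] S T by blast
    then show ?thesis using S T by (simp add: openin_Int le_infI1)
  qed
  have 2: "?L (\<Union>K)" if K: "\<forall>U\<in>K. ?L U" for K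
  proof -
    have e: "\<Union>(\<Union>K) = \<Union>(Union ` K)" by blast
    have "openin (subtopology seq_top (Xgrp p)) (\<Union>(Union ` K))"
      by (rule openin_Union) (use K in blast)
    moreover have "\<Union>K \<subseteq> carrier (E p)" using K by blast
    ultimately show ?thesis by (simp only: e)
  qed
  show ?thesis unfolding istopology_def using 1 2 by blast
qed

lemma openin_Etop: "openin (Etop p) U \<longleftrightarrow> U \<subseteq> carrier (E p) \<and> openin (subtopology seq_top (Xgrp p)) (\<Union>U)"
  unfolding Etop_def by (subst topology_inverse'[OF Etop_istop]) (rule refl)

lemma topspace_Etop: "topspace (Etop p) = carrier (E p)"
proof -
  have "openin (Etop p) (carrier (E p))"
    unfolding openin_Etop Union_carrier
    using openin_topspace[of "subtopology seq_top (Xgrp p)"] by simp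
  moreover have "\<And>S. openin (Etop p) S \<Longrightarrow> S \<subseteq> carrier (E p)"
    by (simp add: openin_Etop)
  ultimately show ?thesis unfolding topspace_def by blast
qed

definition Gens :: "nat \<Rightarrow> ('r::comm_ring_1) Eelt set" where
  "Gens p = {(EV p ^^ n) (Eteich p x) | n (x :: 'r). True}"

lemma Gens_carrier: "Gens p \<subseteq> carrier (E p)"
  using teich_X[of 0 p] by (auto simp: Gens_def Eteich_def EV_pow_Ecos E_carrier intro!: imageI Vpow_X)

lemma approx:
  fixes c :: "nat \<Rightarrow> ('r::comm_ring_1) zpoly"
  assumes c: "c \<in> Xgrp p"
  shows "\<exists>g\<in>Xgrp p. Ecos p g \<in> generate (E p) (Gens p) \<and> (\<forall>i<n. g i = c i)"
proof -
  interpret G: group "E p" by (rule E_group)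
  have sg: "subgroup (generate (E p) (Gens p)) (E p)"
    by (rule G.generate_is_subgroup[OF Gens_carrier])
  let ?H = "{c :: nat \<Rightarrow> 'r zpoly. \<forall>n. \<exists>g\<in>Xgrp p. Ecos p g \<in> generate (E p) (Gens p) \<and> (\<forall>i<n. g i = c i)}"
  have "add_subgroup ?H"
    unfolding add_subgroup_def
  proof (intro conjI ballI)
    show "(\<lambda>_. 0) \<in> ?H"
      using X_0 generate.one[of "E p" "Gens p"] by (auto simp: E_one)
  next
    fix x y assume x: "x \<in> ?H" and y: "y \<in> ?H"
    show "(\<lambda>i. x i + y i) \<in> ?H"
    proof (clarify)
      fix n
      obtain g1 where g1: "g1 \<in> Xgrp p" "Ecos p g1 \<in> generate (E p) (Gens p)" "\<forall>i<n. g1 i = x i" using x by blast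
      obtain g2 where g2: "g2 \<in> Xgrp p" "Ecos p g2 \<in> generate (E p) (Gens p)" "\<forall>i<n. g2 i = y i" using y by blast
      have "Ecos p (\<lambda>i. g1 i + g2 i) \<in> generate (E p) (Gens p)"
        using generate.eng[OF g1(2) g2(2)] by (simp add: Ecos_mult)
      then show "\<exists>g\<in>Xgrp p. Ecos p g \<in> generate (E p) (Gens p) \<and> (\<forall>i<n. g i = x i + y i)"
        using g1 g2 X_add[OF g1(1) g2(1)] by (intro bexI[of _ "\<lambda>i. g1 i + g2 i"]) auto
    qed
  next
    fix x assume x: "x \<in> ?H"
    show "(\<lambda>i. - x i) \<in> ?H"
    proof (clarify)
      fix n
      obtain g1 where g1: "g1 \<in> Xgrp p" "Ecos p g1 \<in> generate (E p) (Gens p)" "\<forall>i<n. g1 i = x i" using x by blast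
      have "inv\<^bsub>E p\<^esub> (Ecos p g1) \<in> generate (E p) (Gens p)"
        using subgroup.m_inv_closed[OF sg g1(2)] .
      then have "Ecos p (\<lambda>i. - g1 i) \<in> generate (E p) (Gens p)" by (simp add: E_inv[OF g1(1)])
      then show "\<exists>g\<in>Xgrp p. Ecos p g \<in> generate (E p) (Gens p) \<and> (\<forall>i<n. g i = - x i)"
        using g1 X_neg[OF g1(1)] by (intro bexI[of _ "\<lambda>i. - g1 i"]) auto
    qed
  qed
  moreover have "seqclosed ?H"
    unfolding seqclosed_def
  proof (intro allI impI)
    fix z assume a: "\<forall>n. \<exists>h\<in>?H. \<forall>i<n. h i = z i"
    show "z \<in> ?H"
    proof (clarify)
      fix n
      obtain h where h: "h \<in> ?H" "\<forall>i<n. h i = z i" using a by blast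
      then obtain g where "g\<in>Xgrp p" "Ecos p g \<in> generate (E p) (Gens p)" "\<forall>i<n. g i = h i" by blast
      then show "\<exists>g\<in>Xgrp p. Ecos p g \<in> generate (E p) (Gens p) \<and> (\<forall>i<n. g i = z i)"
        using h(2) by auto
    qed
  qed
  moreover have "{(seqV p ^^ n) (teich p b) | n b. True} \<subseteq> ?H"
  proof clarify
    fix m n and b :: "'r zpoly"
    have "b - pvar (peval id b) \<in> Iker" by (simp add: Iker_iff peval_diff)
    from XI_gen[OF this, of m p]
    have "Ecos p ((seqV p ^^ m) (teich p b)) = (EV p ^^ m) (Eteich p (peval id b))"
      by (simp add: Eteich_def EV_pow_Ecos Ecos_eq)
    moreover have "(EV p ^^ m) (Eteich p (peval id b)) \<in> Gens p"
      unfolding Gens_def by blast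
    ultimately have "Ecos p ((seqV p ^^ m) (teich p b)) \<in> generate (E p) (Gens p)"
      by (simp add: generate.incl)
    then show "\<exists>g\<in>Xgrp p. Ecos p g \<in> generate (E p) (Gens p) \<and> (\<forall>i<n. g i = (seqV p ^^ m) (teich p b) i)"
      using teich_X[of m p b] by blast
  qed
  ultimately have "Xgrp p \<subseteq> ?H" unfolding Xgrp_def by (rule cg_min)
  then show ?thesis using c by blast
qed

lemma E_topgen: "Etop p closure_of generate (E p) (Gens p) = carrier (E p)"
proof
  show "Etop p closure_of generate (E p) (Gens p) \<subseteq> carrier (E p)"
    using closure_of_subset_topspace[of "Etop p"] by (simp add: topspace_Etop)
next
  show "carrier (E p) \<subseteq> Etop p closure_of generate (E p) (Gens p)"
  proof
    fix C assume C: "C \<in> carrier (E p)"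
    then obtain c where c: "c \<in> Xgrp p" "C = Ecos p c" by (auto simp: E_carrier)
    show "C \<in> Etop p closure_of generate (E p) (Gens p)"
      unfolding in_closure_of topspace_Etop
    proof (intro conjI allI impI C)
      fix T assume T: "C \<in> T \<and> openin (Etop p) T"
      then have Tc: "T \<subseteq> carrier (E p)" and To: "openin (subtopology seq_top (Xgrp p)) (\<Union>T)"
        by (auto simp: openin_Etop)
      then obtain Op where Op: "openin seq_top Op" "\<Union>T = Op \<inter> Xgrp p"
        by (auto simp: openin_subtopology)
      have "c \<in> \<Union>T" using T c Ecos_self[of c p] by blast
      then have "c \<in> Op" using Op by blast
      then obtain n where n: "\<forall>y. (\<forall>i<n. y i = c i) \<longrightarrow> y \<in> Op"
        using Op(1) unfolding open_seq_iff by blast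
      obtain g where g: "g \<in> Xgrp p" "Ecos p g \<in> generate (E p) (Gens p)" "\<forall>i<n. g i = c i"
        using approx[OF c(1)] by blast
      have "g \<in> \<Union>T" using n g Op by blast
      then obtain T' where T': "T' \<in> T" "g \<in> T'" by blast
      have "T' \<in> Ecos p ` Xgrp p" using T' Tc by (auto simp: E_carrier)
      then obtain t where "T' = Ecos p t" by blast
      then have "T' = Ecos p g" using T' Ecos_member_eq by blast
      then show "\<exists>y. y \<in> generate (E p) (Gens p) \<and> y \<in> T" using T' g by blast
    qed
  qed
qed


theorem lemma2p7:
  fixes p :: nat
  assumes "Factorial_Ring.prime p"
  shows
    \<comment> \<open>E(R) is topologically generated by the V^n<x>\<close>
    "Etop p closure_of generate (E p) {(EV p ^^ n) (Eteich p x) | n (x :: 'r::comm_ring_1). True}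
       = carrier (E p :: 'r Eelt monoid)
   \<and> comm_group (E p :: 'r Eelt monoid)
   \<and> EV p \<in> hom (E p :: 'r Eelt monoid) (E p)
   \<and> (\<forall>x :: 'r. Eteich p x \<in> carrier (E p))
   \<comment> \<open>functoriality of E, V and < >\<close>
   \<and> (\<forall>f :: 'r \<Rightarrow> 's::comm_ring_1. cring_hom f \<longrightarrow>
        Emap p f \<in> hom (E p :: 'r Eelt monoid) (E p :: 's Eelt monoid)
        \<and> (\<forall>C \<in> carrier (E p :: 'r Eelt monoid). Emap p f (EV p C) = EV p (Emap p f C))
        \<and> (\<forall>x. Emap p f (Eteich p x) = Eteich p (f x)))
   \<and> (\<forall>C \<in> carrier (E p :: 'r Eelt monoid). Emap p (id :: 'r \<Rightarrow> 'r) C = C)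
   \<and> (\<forall>(f :: 'r \<Rightarrow> 's::comm_ring_1) (g :: 's \<Rightarrow> 't::comm_ring_1).
        cring_hom f \<and> cring_hom g \<longrightarrow>
        (\<forall>C \<in> carrier (E p :: 'r Eelt monoid). Emap p (g \<circ> f) C = Emap p g (Emap p f C)))
   \<comment> \<open>(1)\<close>
   \<and> Eteich p (0 :: 'r) = \<one>\<^bsub>E p\<^esub>
   \<and> (p \<noteq> 2 \<longrightarrow> (\<forall>x :: 'r. Eteich p (- x) = inv\<^bsub>E p\<^esub> (Eteich p x)))
   \<comment> \<open>(2)\<close>
   \<and> (\<forall>x y :: 'r.
        EV p (Eteich p ((x + y) ^ p)) \<otimes>\<^bsub>E p\<^esub> inv\<^bsub>E p\<^esub> (Eteich p (x + y) [^]\<^bsub>E p\<^esub> p)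
        = (EV p (Eteich p (x ^ p)) \<otimes>\<^bsub>E p\<^esub> inv\<^bsub>E p\<^esub> (Eteich p x [^]\<^bsub>E p\<^esub> p))
          \<otimes>\<^bsub>E p\<^esub> (EV p (Eteich p (y ^ p)) \<otimes>\<^bsub>E p\<^esub> inv\<^bsub>E p\<^esub> (Eteich p y [^]\<^bsub>E p\<^esub> p)))
   \<comment> \<open>(3)\<close>
   \<and> filt_complete (E p :: 'r Eelt monoid) (EV p)
   \<comment> \<open>(4)\<close>
   \<and> ((\<forall>a :: 'r. of_nat p * a = 0 \<longrightarrow> a = 0) \<longrightarrow>
        (\<forall>e \<in> carrier (E p :: 'r Eelt monoid). e [^]\<^bsub>E p\<^esub> p = \<one>\<^bsub>E p\<^esub> \<longrightarrow> e = \<one>\<^bsub>E p\<^esub>))"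
  proof -
  have p0: "p > 0" using assms prime_gt_0_nat by blast
  have odd: "p \<noteq> 2 \<longrightarrow> odd p"
  proof
    assume "p \<noteq> 2"
    moreover have "p \<ge> 2" using prime_ge_2_nat[OF assms] .
    ultimately have "p > 2" by linarith
    then show "odd p" by (rule prime_odd_nat[OF assms])
  qed
  show ?thesis
    apply (intro conjI)
    subgoal by (rule E_topgen[of p, unfolded Gens_def])
    subgoal by (rule E_comm_group)
    subgoal by (rule EV_hom)
    subgoal using Eteich_carrier by blast
    subgoal using Emap_hom Emap_EV Emap_Eteich by blast
    subgoal using Emap_id by blast
    subgoal using Emap_comp by blast
    subgoal by (rule Eteich_0[OF p0])
    subgoal using odd Eteich_neg by blast
    subgoal using additivity[OF p0] by blast
    subgoal by (rule E_filt_complete)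
    subgoal by (intro impI) (rule E_torsion_free[OF assms])
    done
qed

end
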